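(* Consider the toric code setting and the Liouvillian $\mathcal{L}$ described in the context. Let $\ket{\Psi}\in(\mathbb{C}^2)^{\otimes 2}$, let $\rho_{\mathcal{D}}$ be an arbitrary state on the qubits of $\mathcal{D}$, and let $$\rho_0=|\Psi\rangle\langle\Psi|_{\mathcal{A}}\otimes|+\rangle\langle+|^{\otimes 2(L-1)}_{\mathcal{B}\mathcal{B}'}\otimes|0\rangle\langle 0|^{\otimes 2(L-1)}_{\mathcal{C}\mathcal{C}'}\otimes\rho_{\mathcal{D}}.$$ Then for every two-qubit Pauli operator $P=P_1\otimes P_2$, $P_j\in\{I,X,Y,Z\}$, and every $t\ge 0$, $$\mathrm{tr}\big(\overline{P}\,e^{t\mathcal{L}}(\rho_0)\big)=\langle\Psi|P|\Psi\rangle .$$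
   Context: Lattice: periodic $L\times L$, vertices $(x,y)\in\mathbb{Z}_L^2$ ($x$ eastwards, $y$ northwards), horizontal edge $h(x,y)$ joining $(x,y),(x+1,y)$, vertical edge $u(x,y)$ joining $(x,y),(x,y+1)$, one qubit per edge ($2L^2$ qubits). Plaquette $p(x,y)$ has boundary edges $h(x,y),h(x,y+1),u(x,y),u(x+1,y)$; the star of vertex $(x,y)$ is $h(x,y),h(x-1,y),u(x,y),u(x,y-1)$. Stabilizers $S_p=\prod Z$ over the boundary of $p$, $S_v=\prod X$ over the star of $v$; $\mathcal{S}$ denotes the set of all plaquettes and vertices; $\mathbf{P}_j^{\pm}=\frac12(I\pm S_j)$. Special plaquette $p_*=p(0,0)$, special vertex $v_*=(1,1)$. Correction operators: $C_{p_*}=C_{v_*}=I$; for $p=p(x,0)$ with $x\neq0$, $C_p=X$ on $u(x+1,0)$; for $p=p(x,y)$ with $y\neq0$, $C_p=X$ on $h(x,y+1)$; for $v=(x,1)$ with $x\neq1$, $C_v=Z$ on $h(x-1,1)$; for $v=(x,y)$ with $y\neq1$, $C_v=Z$ on $u(x,y-1)$. For $j\in\mathcal{S}$ define the channel $\mathcal{T}_j(\rho)=\mathbf{P}_j^+\rho\mathbf{P}_j^++C_j\mathbf{P}_j^-\rho\mathbf{P}_j^-C_j^\dagger$, and $\mathcal{L}=\sum_{j\in\mathcal{S}}(\mathcal{T}_j-\mathrm{id})$. Qubit sets: $A_1=h(0,1)$, $A_2=u(1,0)$, $\mathcal{A}=\{A_1,A_2\}$, $\mathcal{B}=\{h(0,y):y\neq1\}$,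 $\mathcal{C}=\{h(x,1):x\neq0\}$, $\mathcal{B}'=\{u(x,0):x\neq1\}$, $\mathcal{C}'=\{u(1,y):y\neq0\}$, $\mathcal{D}$ the remaining $2(L-1)^2$ qubits. Logical operators: $\bar X_1=X_{A_1}\prod_{b\in\mathcal{B}}X_b$, $\bar Z_1=Z_{A_1}\prod_{c\in\mathcal{C}}Z_c$, $\bar X_2=X_{A_2}\prod_{b\in\mathcal{B}'}X_b$, $\bar Z_2=Z_{A_2}\prod_{c\in\mathcal{C}'}Z_c$, $\bar Y_j=i\bar X_j\bar Z_j$, $\bar I=I$; for $P=P_1\otimes P_2$ (first factor on $A_1$, second on $A_2$), $\overline{P}=\bar P_1\bar P_2$. $|+\rangle,|0\rangle$ are the $+1$ eigenstates of $X$, $Z$. *)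

theory Defs
  imports "HOL-Analysis.Analysis" "Jordan_Normal_Form.Schur_Decomposition"
begin

text \<open>An n-qubit operator is a 2^n x 2^n complex matrix. The computational basis
state with index i has qubit q in state bit q i (little-endian).\<close>

definition bit_of :: "nat \<Rightarrow> nat \<Rightarrow> nat" where
  "bit_of q i = (i div 2 ^ q) mod 2"

definition mtrace :: "complex mat \<Rightarrow> complex" where
  "mtrace M = (\<Sum>i<dim_row M. M $$ (i, i))"

definition embed1 :: "nat \<Rightarrow> nat \<Rightarrow> complex mat \<Rightarrow> complex mat" where
  "embed1 n q M = mat (2 ^ n) (2 ^ n) (\<lambda>(i, j).
      if (\<forall>r<n. r \<noteq> q \<longrightarrow> bit_of r i = bit_of r j) then M $$ (bit_of q i, bit_of q j) else 0)"

definition sigX :: "complex mat" where "sigX = mat 2 2 (\<lambda>(i, j). if i \<noteq> j then 1 else 0)"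
definition sigZ :: "complex mat" where "sigZ = mat 2 2 (\<lambda>(i, j). if i = j then (if i = 0 then 1 else -1) else 0)"
definition sigY :: "complex mat" where "sigY = mat 2 2 (\<lambda>(i, j). if i = 0 \<and> j = 1 then - \<i> else if i = 1 \<and> j = 0 then \<i> else 0)"

datatype pauli = PI | PX | PY | PZ

definition pmat :: "pauli \<Rightarrow> complex mat" where
  "pmat P = (case P of PI \<Rightarrow> 1\<^sub>m 2 | PX \<Rightarrow> sigX | PY \<Rightarrow> sigY | PZ \<Rightarrow> sigZ)"

text \<open>Kronecker product of two 2x2 matrices; the first factor is the more significant one
 (basis index 2*b1 + b2).\<close>
definition kron2 :: "complex mat \<Rightarrow> complex mat \<Rightarrow> complex mat" where
  "kron2 A B = mat 4 4 (\<lambda>(i, j). A $$ (i div 2, j div 2) * B $$ (i mod 2, j mod 2))"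

definition prod_on :: "nat \<Rightarrow> complex mat \<Rightarrow> nat list \<Rightarrow> complex mat" where
  "prod_on n M qs = foldr (\<lambda>q A. embed1 n q M * A) qs (1\<^sub>m (2 ^ n))"

definition nq :: "nat \<Rightarrow> nat" where "nq L = 2 * L * L"

definition cmod :: "nat \<Rightarrow> int \<Rightarrow> nat" where "cmod L x = nat (x mod int L)"

definition hq :: "nat \<Rightarrow> int \<Rightarrow> int \<Rightarrow> nat" where
  "hq L x y = cmod L y * L + cmod L x"
definition uq :: "nat \<Rightarrow> int \<Rightarrow> int \<Rightarrow> nat" where
  "uq L x y = L * L + cmod L y * L + cmod L x"

datatype site = Plaq int int | Vert int int

definition sites :: "nat \<Rightarrow> site set" where
  "sites L = {Plaq x y | x y. 0 \<le> x \<and> x < int L \<and> 0 \<le> y \<and> y < int L}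
           \<union> {Vert x y | x y. 0 \<le> x \<and> x < int L \<and> 0 \<le> y \<and> y < int L}"

definition stab :: "nat \<Rightarrow> site \<Rightarrow> complex mat" where
  "stab L s = (case s of
      Plaq x y \<Rightarrow> prod_on (nq L) sigZ [hq L x y, hq L x (y + 1), uq L x y, uq L (x + 1) y]
    | Vert x y \<Rightarrow> prod_on (nq L) sigX [hq L x y, hq L (x - 1) y, uq L x y, uq L x (y - 1)])"

text \<open>Correction operators; p_* = p(0,0), v_* = (1,1) (taken mod L).\<close>
definition corr :: "nat \<Rightarrow> site \<Rightarrow> complex mat" where
  "corr L s = (case s of
      Plaq x y \<Rightarrow>
        (if cmod L x = 0 \<and> cmod L y = 0 then 1\<^sub>m (2 ^ nq L)
         else if cmod L y = 0 then embed1 (nq L) (uq L (x + 1) 0) sigX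
         else embed1 (nq L) (hq L x (y + 1)) sigX)
    | Vert x y \<Rightarrow>
        (if cmod L x = cmod L 1 \<and> cmod L y = cmod L 1 then 1\<^sub>m (2 ^ nq L)
         else if cmod L y = cmod L 1 then embed1 (nq L) (hq L (x - 1) 1) sigZ
         else embed1 (nq L) (uq L x (y - 1)) sigZ))"

definition projP :: "nat \<Rightarrow> site \<Rightarrow> complex mat" where
  "projP L s = (1/2 :: complex) \<cdot>\<^sub>m (1\<^sub>m (2 ^ nq L) + stab L s)"
definition projM :: "nat \<Rightarrow> site \<Rightarrow> complex mat" where
  "projM L s = (1/2 :: complex) \<cdot>\<^sub>m (1\<^sub>m (2 ^ nq L) - stab L s)"

definition chanT :: "nat \<Rightarrow> site \<Rightarrow> complex mat \<Rightarrow> complex mat" where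
  "chanT L s \<rho> = projP L s * \<rho> * projP L s
      + corr L s * projM L s * \<rho> * projM L s * mat_adjoint (corr L s)"

definition liouv :: "nat \<Rightarrow> complex mat \<Rightarrow> complex mat" where
  "liouv L \<rho> = mat (2 ^ nq L) (2 ^ nq L)
      (\<lambda>(i, j). \<Sum>s\<in>sites L. (chanT L s \<rho> - \<rho>) $$ (i, j))"

definition exp_liouv :: "nat \<Rightarrow> real \<Rightarrow> complex mat \<Rightarrow> complex mat" where
  "exp_liouv L t \<rho> = mat (2 ^ nq L) (2 ^ nq L)
      (\<lambda>(i, j). \<Sum>k. (complex_of_real (t ^ k / fact k)) * (((liouv L) ^^ k) \<rho>) $$ (i, j))"

definition qA1 :: "nat \<Rightarrow> nat" where "qA1 L = hq L 0 1"
definition qA2 :: "nat \<Rightarrow> nat" where "qA2 L = uq L 1 0"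
definition qB :: "nat \<Rightarrow> nat set" where
  "qB L = {hq L 0 y | y. 0 \<le> y \<and> y < int L \<and> cmod L y \<noteq> cmod L 1}"
definition qC :: "nat \<Rightarrow> nat set" where
  "qC L = {hq L x 1 | x. 0 \<le> x \<and> x < int L \<and> cmod L x \<noteq> 0}"
definition qB' :: "nat \<Rightarrow> nat set" where
  "qB' L = {uq L x 0 | x. 0 \<le> x \<and> x < int L \<and> cmod L x \<noteq> cmod L 1}"
definition qC' :: "nat \<Rightarrow> nat set" where
  "qC' L = {uq L 1 y | y. 0 \<le> y \<and> y < int L \<and> cmod L y \<noteq> 0}"
definition qD :: "nat \<Rightarrow> nat set" where
  "qD L = {0..<nq L} - ({qA1 L, qA2 L} \<union> qB L \<union> qC L \<union> qB' L \<union> qC' L)"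

definition logX1 :: "nat \<Rightarrow> complex mat" where
  "logX1 L = prod_on (nq L) sigX (qA1 L # sorted_list_of_set (qB L))"
definition logZ1 :: "nat \<Rightarrow> complex mat" where
  "logZ1 L = prod_on (nq L) sigZ (qA1 L # sorted_list_of_set (qC L))"
definition logX2 :: "nat \<Rightarrow> complex mat" where
  "logX2 L = prod_on (nq L) sigX (qA2 L # sorted_list_of_set (qB' L))"
definition logZ2 :: "nat \<Rightarrow> complex mat" where
  "logZ2 L = prod_on (nq L) sigZ (qA2 L # sorted_list_of_set (qC' L))"

definition logical1 :: "nat \<Rightarrow> pauli \<Rightarrow> complex mat" where
  "logical1 L P = (case P of PI \<Rightarrow> 1\<^sub>m (2 ^ nq L) | PX \<Rightarrow> logX1 L | PZ \<Rightarrow> logZ1 L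
      | PY \<Rightarrow> \<i> \<cdot>\<^sub>m (logX1 L * logZ1 L))"
definition logical2 :: "nat \<Rightarrow> pauli \<Rightarrow> complex mat" where
  "logical2 L P = (case P of PI \<Rightarrow> 1\<^sub>m (2 ^ nq L) | PX \<Rightarrow> logX2 L | PZ \<Rightarrow> logZ2 L
      | PY \<Rightarrow> \<i> \<cdot>\<^sub>m (logX2 L * logZ2 L))"

definition logical :: "nat \<Rightarrow> pauli \<Rightarrow> pauli \<Rightarrow> complex mat" where
  "logical L P1 P2 = logical1 L P1 * logical2 L P2"

definition dIndex :: "nat \<Rightarrow> nat \<Rightarrow> nat" where
  "dIndex L i = (let ds = sorted_list_of_set (qD L) in
      \<Sum>k<length ds. bit_of (ds ! k) i * 2 ^ k)"

definition is_density :: "nat \<Rightarrow> complex mat \<Rightarrow> bool" where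
  "is_density n \<rho> \<longleftrightarrow> \<rho> \<in> carrier_mat n n \<and> mtrace \<rho> = 1 \<and>
     (\<forall>v \<in> carrier_vec n. conjugate v \<bullet> (\<rho> *\<^sub>v v) \<ge> 0)"

text \<open>rho_0 = |Psi><Psi|_A (x) |+><+|_{BB'} (x) |0><0|_{CC'} (x) rho_D; the A-register index
 is 2*(bit of A1) + (bit of A2).\<close>
definition rho0 :: "nat \<Rightarrow> complex vec \<Rightarrow> complex mat \<Rightarrow> complex mat" where
  "rho0 L \<Psi> \<rho>D = mat (2 ^ nq L) (2 ^ nq L) (\<lambda>(i, j).
      (\<Psi> $ (2 * bit_of (qA1 L) i + bit_of (qA2 L) i)) * cnj (\<Psi> $ (2 * bit_of (qA1 L) j + bit_of (qA2 L) j))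
    * (\<Prod>q\<in>qB L \<union> qB' L. (1/2 :: complex))
    * (\<Prod>q\<in>qC L \<union> qC' L. (if bit_of q i = 0 \<and> bit_of q j = 0 then 1 else 0))
    * \<rho>D $$ (dIndex L i, dIndex L j))"

end

theory Submission
  imports Defs
begin

definition B01 :: "nat set" where "B01 = {0,1}"
definition enc :: "nat \<Rightarrow> (nat \<Rightarrow> nat) \<Rightarrow> nat" where "enc n v = (\<Sum>q<n. v q * 2^q)"
definition bv :: "nat \<Rightarrow> nat \<Rightarrow> nat \<Rightarrow> nat" where "bv n i = (\<lambda>q\<in>{..<n}. bit_of q i)"

lemma bit_of_le1: "bit_of q i \<le> 1"
  unfolding bit_of_def by simp

lemma bit_of_B01[simp]: "bit_of q i \<in> B01"
  unfolding bit_of_def B01_def by auto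

lemma enc_Suc: "enc (Suc n) v = enc n v + v n * 2^n"
  unfolding enc_def by simp

lemma enc_less: "(\<And>q. q<n \<Longrightarrow> v q \<le> 1) \<Longrightarrow> enc n v < 2^n"
proof (induction n)
  case 0 then show ?case by (simp add: enc_def)
next
  case (Suc n)
  have "enc n v < 2^n" using Suc by auto
  moreover have "v n \<le> 1" using Suc by auto
  ultimately have "enc n v + v n * 2^n < 2^n + 1 * 2^n"
    by (metis add_less_le_mono mult_le_mono1)
  then show ?case by (simp add: enc_Suc)
qed

lemma bit_of_add_high:
  assumes "r < n" shows "bit_of r (a + c * 2^n) = bit_of r a"
proof -
  have "(2::nat)^n = 2^r * 2 * 2^(n - Suc r)"
    using assms by (metis power_add power_Suc2 Suc_leI le_add_diff_inverse)
  then have e: "a + c * 2^n = a + (2 * (c * 2^(n - Suc r))) * 2^r" by simp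
  have "(a + (2 * (c * 2^(n - Suc r))) * 2^r) div 2^r = (2 * (c * 2^(n - Suc r))) + a div 2^r"
    by (rule div_mult_self1; simp)
  then have "(a + c * 2^n) div 2^r = a div 2^r + 2 * (c * 2^(n - Suc r))"
    by (simp only: e)
  then show ?thesis unfolding bit_of_def by simp
qed

lemma bit_of_add_top:
  assumes "a < 2^n" "c \<le> 1" shows "bit_of n (a + c * 2^n) = c"
proof -
  have "(a + c * 2^n) div 2^n = c" using assms by simp
  then show ?thesis unfolding bit_of_def using assms by simp
qed

lemma bit_of_enc:
  "(\<And>q. q<n \<Longrightarrow> v q \<le> 1) \<Longrightarrow> r < n \<Longrightarrow> bit_of r (enc n v) = v r"
proof (induction n)
  case 0 then show ?case by simp
next
  case (Suc n)
  have lt: "enc n v < 2^n" using Suc.prems by (intro enc_less) auto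
  show ?case
  proof (cases "r < n")
    case True
    then show ?thesis using Suc by (simp add: enc_Suc bit_of_add_high)
  next
    case False
    then have "r = n" using Suc by auto
    then show ?thesis using lt Suc.prems by (simp add: enc_Suc bit_of_add_top)
  qed
qed

lemma enc_bits: "enc n (\<lambda>q. bit_of q i) = i mod 2^n"
proof (induction n)
  case 0 then show ?case by (simp add: enc_def)
next
  case (Suc n)
  have "i mod (2^n * 2) = 2^n * (i div 2^n mod 2) + i mod 2^n"
    by (rule mod_mult2_eq)
  then show ?case using Suc by (simp add: enc_Suc bit_of_def mult.commute)
qed

lemma enc_cong: "(\<And>q. q<n \<Longrightarrow> v q = w q) \<Longrightarrow> enc n v = enc n w"
  unfolding enc_def by auto

lemma enc_bv: "i < 2^n \<Longrightarrow> enc n (bv n i) = i"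
proof -
  assume "i < 2^n"
  have "enc n (bv n i) = enc n (\<lambda>q. bit_of q i)" by (rule enc_cong) (simp add: bv_def)
  then show ?thesis using enc_bits[of n i] \<open>i < 2^n\<close> by simp
qed

lemma bits_eq:
  assumes "i < 2^n" "j < 2^n" "\<And>r. r<n \<Longrightarrow> bit_of r i = bit_of r j"
  shows "i = j"
proof -
  have "enc n (\<lambda>q. bit_of q i) = enc n (\<lambda>q. bit_of q j)" by (rule enc_cong) (use assms in auto)
  then show ?thesis using enc_bits[of n i] enc_bits[of n j] assms by simp
qed

lemma PiE_B01_le1: "v \<in> PiE A (\<lambda>_. B01) \<Longrightarrow> q \<in> A \<Longrightarrow> v q \<le> 1"
  unfolding B01_def by (auto simp: PiE_def Pi_def)

lemma sum_bits:
  "(\<Sum>i<2^n. f i) = (\<Sum>v\<in>PiE {..<n} (\<lambda>_. B01). f (enc n v))"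
proof (rule sum.reindex_bij_witness[where i="enc n" and j="bv n"])
  fix v assume v: "v \<in> PiE {..<n} (\<lambda>_. B01)"
  have le: "\<And>q. q<n \<Longrightarrow> v q \<le> 1" using PiE_B01_le1[OF v] by simp
  show "bv n (enc n v) = v"
  proof
    fix q show "bv n (enc n v) q = v q"
    proof (cases "q < n")
      case True then show ?thesis using bit_of_enc[of n v q, OF le] by (simp add: bv_def)
    next
      case False then show ?thesis using PiE_arb[OF v, of q] by (simp add: bv_def)
    qed
  qed
  show "enc n v \<in> {..<2^n}" using enc_less[of n v] le by simp
next
  fix a assume "a \<in> {..<(2::nat)^n}"
  then show "enc n (bv n a) = a" by (simp add: enc_bv)
  then show "f (enc n (bv n a)) = f a" by simp
next
  fix a assume "a \<in> {..<(2::nat)^n}"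
  show "bv n a \<in> PiE {..<n} (\<lambda>_. B01)" unfolding bv_def by (rule restrict_PiE_iff[THEN iffD2]) simp
qed


definition sim :: "nat \<Rightarrow> nat set \<Rightarrow> nat \<Rightarrow> nat \<Rightarrow> bool" where
  "sim n S i j \<longleftrightarrow> (\<forall>r<n. (bit_of r i = bit_of r j) = (r \<notin> S))"

definition xop :: "nat \<Rightarrow> nat set \<Rightarrow> complex mat" where
  "xop n S = mat (2^n) (2^n) (\<lambda>(i,j). if sim n S i j then 1 else 0)"

definition zsgn :: "nat set \<Rightarrow> nat \<Rightarrow> complex" where
  "zsgn T i = (\<Prod>r\<in>T. if bit_of r i = 1 then -1 else 1)"

definition zop :: "nat \<Rightarrow> nat set \<Rightarrow> complex mat" where
  "zop n T = mat (2^n) (2^n) (\<lambda>(i,j). if i = j then zsgn T i else 0)"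

definition flip :: "nat \<Rightarrow> nat set \<Rightarrow> nat \<Rightarrow> nat" where
  "flip n S i = enc n (\<lambda>r. if r \<in> S then 1 - bit_of r i else bit_of r i)"

definition sd :: "'a set \<Rightarrow> 'a set \<Rightarrow> 'a set" where "sd S T = (S - T) \<union> (T - S)"

definition sg :: "nat set \<Rightarrow> nat set \<Rightarrow> complex" where "sg S T = (-1) ^ card (S \<inter> T)"

lemma bit_of_cases: "bit_of r i = 0 \<or> bit_of r i = 1"
  using bit_of_le1[of r i] by auto

lemma bit_of_leS[simp]: "bit_of r i \<le> Suc 0"
  using bit_of_le1[of r i] by auto

lemma flip_less: "flip n S i < 2^n"
  unfolding flip_def by (rule enc_less) (auto simp: bit_of_le1)

lemma bit_of_flip: "r < n \<Longrightarrow> bit_of r (flip n S i) = (if r \<in> S then 1 - bit_of r i else bit_of r i)"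
  unfolding flip_def by (rule bit_of_enc) (auto simp: bit_of_le1)

lemma sim_flip: "sim n S i (flip n S i)"
  unfolding sim_def
proof (intro allI impI)
  fix r assume r: "r < n"
  show "(bit_of r i = bit_of r (flip n S i)) = (r \<notin> S)"
    using bit_of_cases[of r i] by (auto simp: bit_of_flip r)
qed

lemma sim_unique: assumes "sim n S i j" "j < 2^n" shows "j = flip n S i"
proof (rule bits_eq[OF assms(2) flip_less])
  fix r assume r: "r < n"
  show "bit_of r j = bit_of r (flip n S i)"
    using assms(1) r bit_of_cases[of r i] bit_of_cases[of r j] unfolding sim_def
    by (auto simp: bit_of_flip)
qed

lemma sim_iff: "j < 2^n \<Longrightarrow> sim n S i j \<longleftrightarrow> j = flip n S i"
  using sim_unique sim_flip by blast

lemma sim_sym: "sim n S i j = sim n S j i"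
  unfolding sim_def by auto

lemma sim_empty: "i < 2^n \<Longrightarrow> j < 2^n \<Longrightarrow> sim n {} i j \<longleftrightarrow> i = j"
  unfolding sim_def using bits_eq[of i n j] by auto

lemma sim_trans_sd: assumes "sim n S i k" "sim n T k j" shows "sim n (sd S T) i j"
  unfolding sim_def
proof (intro allI impI)
  fix r assume r: "r < n"
  have "(bit_of r i = bit_of r k) = (r \<notin> S)" "(bit_of r k = bit_of r j) = (r \<notin> T)"
    using assms r unfolding sim_def by auto
  then show "(bit_of r i = bit_of r j) = (r \<notin> sd S T)"
    using bit_of_cases[of r i] bit_of_cases[of r j] bit_of_cases[of r k] unfolding sd_def by auto
qed

lemma sim_sd_sim: assumes "sim n (sd S T) i j" "sim n S i k" shows "sim n T k j"
  unfolding sim_def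
proof (intro allI impI)
  fix r assume r: "r < n"
  have "(bit_of r i = bit_of r j) = (r \<notin> sd S T)" "(bit_of r i = bit_of r k) = (r \<notin> S)"
    using assms r unfolding sim_def by auto
  then show "(bit_of r k = bit_of r j) = (r \<notin> T)"
    using bit_of_cases[of r i] bit_of_cases[of r j] bit_of_cases[of r k] unfolding sd_def by auto
qed

lemma xop_carrier[simp]: "xop n S \<in> carrier_mat (2^n) (2^n)"
  and zop_carrier[simp]: "zop n T \<in> carrier_mat (2^n) (2^n)"
  unfolding xop_def zop_def by auto

lemma xop_dims[simp]: "dim_row (xop n S) = 2^n" "dim_col (xop n S) = 2^n"
  and zop_dims[simp]: "dim_row (zop n T) = 2^n" "dim_col (zop n T) = 2^n"
  unfolding xop_def zop_def by auto

lemma xop_index: "i < 2^n \<Longrightarrow> j < 2^n \<Longrightarrow> xop n S $$ (i,j) = (if sim n S i j then 1 else 0)"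
  unfolding xop_def by simp

lemma zop_index: "i < 2^n \<Longrightarrow> j < 2^n \<Longrightarrow> zop n T $$ (i,j) = (if i = j then zsgn T i else 0)"
  unfolding zop_def by simp

lemma mult_entry:
  assumes "A \<in> carrier_mat N N" "B \<in> carrier_mat N N" "i < N" "j < N"
  shows "(A * B) $$ (i,j) = (\<Sum>k<N. A $$ (i,k) * B $$ (k,j))"
  using assms by (simp add: scalar_prod_def lessThan_atLeast0)

lemma sum_single:
  assumes "k0 < N" "\<And>k. k < N \<Longrightarrow> k \<noteq> k0 \<Longrightarrow> f k = 0"
  shows "(\<Sum>k<(N::nat). f k) = (f k0 :: 'a::comm_monoid_add)"
proof -
  have "(\<Sum>k<N. f k) = (\<Sum>k\<in>{k0}. f k)"
    by (rule sum.mono_neutral_right) (use assms in auto)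
  then show ?thesis by simp
qed

lemma xop_mult: "xop n S * xop n T = xop n (sd S T)"
proof (rule eq_matI)
  fix i j assume i: "i < dim_row (xop n (sd S T))" and j: "j < dim_col (xop n (sd S T))"
  then have i: "i < 2^n" and j: "j < 2^n" by auto
  have "(xop n S * xop n T) $$ (i,j) = (\<Sum>k<2^n. xop n S $$ (i,k) * xop n T $$ (k,j))"
    by (rule mult_entry) (use i j in auto)
  also have "\<dots> = xop n S $$ (i, flip n S i) * xop n T $$ (flip n S i, j)"
    by (rule sum_single[OF flip_less]) (auto simp: xop_index sim_iff i)
  also have "\<dots> = (if sim n (sd S T) i j then 1 else 0)"
    using sim_flip[of n S i] sim_trans_sd[of n S i "flip n S i" T j] sim_sd_sim[of n S T i j "flip n S i"]
    by (auto simp: xop_index i j flip_less)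
  finally show "(xop n S * xop n T) $$ (i,j) = xop n (sd S T) $$ (i,j)"
    by (simp add: xop_index i j)
qed auto

lemma zsgn_sd:
  assumes "finite S" "finite T"
  shows "zsgn S i * zsgn T i = zsgn (sd S T) i"
proof -
  let ?f = "\<lambda>r. if bit_of r i = 1 then -1 else (1::complex)"
  have sq: "?f r * ?f r = 1" for r by auto
  have "zsgn S i = prod ?f (S - T) * prod ?f (S \<inter> T)"
    unfolding zsgn_def using prod.Int_Diff[OF assms(1), of ?f T] by (simp add: mult.commute)
  moreover have "zsgn T i = prod ?f (T - S) * prod ?f (S \<inter> T)"
    unfolding zsgn_def using prod.Int_Diff[OF assms(2), of ?f S] by (simp add: mult.commute Int_commute)
  moreover have "prod ?f (S \<inter> T) * prod ?f (S \<inter> T) = 1"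
    by (simp add: prod.distrib[symmetric] sq)
  moreover have "zsgn (sd S T) i = prod ?f (S - T) * prod ?f (T - S)"
    unfolding zsgn_def sd_def using assms by (subst prod.union_disjoint) auto
  ultimately show ?thesis by (simp add: algebra_simps)
qed

lemma zop_mult: "finite S \<Longrightarrow> finite T \<Longrightarrow> zop n S * zop n T = zop n (sd S T)"
proof (rule eq_matI)
  fix i j assume fin: "finite S" "finite T" and i: "i < dim_row (zop n (sd S T))" and j: "j < dim_col (zop n (sd S T))"
  then have i: "i < 2^n" and j: "j < 2^n" by auto
  have "(zop n S * zop n T) $$ (i,j) = (\<Sum>k<2^n. zop n S $$ (i,k) * zop n T $$ (k,j))"
    by (rule mult_entry) (use i j in auto)
  also have "\<dots> = zop n S $$ (i, i) * zop n T $$ (i, j)"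
    by (rule sum_single[OF i]) (auto simp: zop_index i)
  also have "\<dots> = zop n (sd S T) $$ (i,j)"
    using zsgn_sd[OF fin] by (auto simp: zop_index i j)
  finally show "(zop n S * zop n T) $$ (i,j) = zop n (sd S T) $$ (i,j)" .
qed auto

lemma zsgn_sim:
  assumes "sim n S i j" "T \<subseteq> {..<n}"
  shows "zsgn T i = sg S T * zsgn T j"
proof -
  have fin: "finite T" using assms(2) finite_subset by blast
  let ?f = "\<lambda>k r. if bit_of r k = 1 then -1 else (1::complex)"
  have "zsgn T i = prod (?f i) (T - S) * prod (?f i) (T \<inter> S)"
    unfolding zsgn_def using prod.Int_Diff[OF fin, of "?f i" S] by (simp add: mult.commute)
  moreover have "zsgn T j = prod (?f j) (T - S) * prod (?f j) (T \<inter> S)"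
    unfolding zsgn_def using prod.Int_Diff[OF fin, of "?f j" S] by (simp add: mult.commute)
  moreover have "prod (?f i) (T - S) = prod (?f j) (T - S)"
    using assms unfolding sim_def by (intro prod.cong) auto
  moreover have "prod (?f i) (T \<inter> S) = prod (\<lambda>r. - ?f j r) (T \<inter> S)"
  proof (rule prod.cong)
    fix r assume "r \<in> T \<inter> S"
    then have "r < n" "bit_of r i \<noteq> bit_of r j" using assms unfolding sim_def by auto
    then show "?f i r = - ?f j r" using bit_of_cases[of r i] bit_of_cases[of r j] by auto
  qed simp
  moreover have "prod (\<lambda>r. - ?f j r) (T \<inter> S) = (-1)^card (T \<inter> S) * prod (?f j) (T \<inter> S)"
    by (simp add: prod_uminus) 
  ultimately show ?thesis unfolding sg_def by (simp add: Int_commute)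
qed

lemma zop_xop:
  assumes "T \<subseteq> {..<n}"
  shows "zop n T * xop n S = sg S T \<cdot>\<^sub>m (xop n S * zop n T)"
proof (rule eq_matI)
  fix i j assume i: "i < dim_row (sg S T \<cdot>\<^sub>m (xop n S * zop n T))" and j: "j < dim_col (sg S T \<cdot>\<^sub>m (xop n S * zop n T))"
  then have i: "i < 2^n" and j: "j < 2^n" by auto
  have "(zop n T * xop n S) $$ (i,j) = (\<Sum>k<2^n. zop n T $$ (i,k) * xop n S $$ (k,j))"
    by (rule mult_entry) (use i j in auto)
  also have "\<dots> = zop n T $$ (i, i) * xop n S $$ (i, j)"
    by (rule sum_single[OF i]) (auto simp: zop_index i)
  also have "\<dots> = (if sim n S i j then zsgn T i else 0)" by (simp add: zop_index xop_index i j)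
  finally have 1: "(zop n T * xop n S) $$ (i,j) = (if sim n S i j then zsgn T i else 0)" .
  have "(xop n S * zop n T) $$ (i,j) = (\<Sum>k<2^n. xop n S $$ (i,k) * zop n T $$ (k,j))"
    by (rule mult_entry) (use i j in auto)
  also have "\<dots> = xop n S $$ (i, j) * zop n T $$ (j, j)"
    by (rule sum_single[OF j]) (auto simp: zop_index j)
  also have "\<dots> = (if sim n S i j then zsgn T j else 0)" by (simp add: zop_index xop_index i j)
  finally have 2: "(xop n S * zop n T) $$ (i,j) = (if sim n S i j then zsgn T j else 0)" .
  show "(zop n T * xop n S) $$ (i,j) = (sg S T \<cdot>\<^sub>m (xop n S * zop n T)) $$ (i,j)"
    using 1 2 zsgn_sim[OF _ assms, of S i j] i j by auto
qed auto

lemma xop_empty: "xop n {} = 1\<^sub>m (2^n)"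
  by (rule eq_matI) (auto simp: xop_index sim_empty)

lemma zop_empty: "zop n {} = 1\<^sub>m (2^n)"
  by (rule eq_matI) (auto simp: zop_index zsgn_def)


lemma embed1_X: assumes "q < n" shows "embed1 n q sigX = xop n {q}"
proof (rule eq_matI)
  fix i j assume "i < dim_row (xop n {q})" "j < dim_col (xop n {q})"
  then have i: "i < 2^n" and j: "j < 2^n" by auto
  have bi: "bit_of q i < 2" "bit_of q j < 2" using bit_of_cases[of q i] bit_of_cases[of q j] by auto
  have "sim n {q} i j \<longleftrightarrow> (\<forall>r<n. r \<noteq> q \<longrightarrow> bit_of r i = bit_of r j) \<and> bit_of q i \<noteq> bit_of q j"
    unfolding sim_def using assms by auto
  then show "embed1 n q sigX $$ (i, j) = xop n {q} $$ (i, j)"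
    unfolding embed1_def sigX_def using i j bi by (auto simp: xop_index)
qed (auto simp: embed1_def)

lemma embed1_Z: assumes "q < n" shows "embed1 n q sigZ = zop n {q}"
proof (rule eq_matI)
  fix i j assume "i < dim_row (zop n {q})" "j < dim_col (zop n {q})"
  then have i: "i < 2^n" and j: "j < 2^n" by auto
  have bi: "bit_of q i < 2" "bit_of q j < 2" using bit_of_cases[of q i] bit_of_cases[of q j] by auto
  have "(\<forall>r<n. r \<noteq> q \<longrightarrow> bit_of r i = bit_of r j) \<and> bit_of q i = bit_of q j \<longleftrightarrow> i = j"
    using bits_eq[OF i j] assms by auto
  then show "embed1 n q sigZ $$ (i, j) = zop n {q} $$ (i, j)"
    unfolding embed1_def sigZ_def using i j bi bit_of_cases[of q i]
    by (auto simp: zop_index zsgn_def)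
qed (auto simp: embed1_def)

fun odds :: "nat list \<Rightarrow> nat set" where
  "odds [] = {}"
| "odds (q # qs) = sd {q} (odds qs)"

lemma odds_finite[simp]: "finite (odds qs)"
  by (induction qs) (auto simp: sd_def)

lemma odds_sub: "odds qs \<subseteq> set qs"
  by (induction qs) (auto simp: sd_def)

lemma odds_distinct: "distinct qs \<Longrightarrow> odds qs = set qs"
  by (induction qs) (auto simp: sd_def)

lemma prod_on_Cons: "prod_on n M (q # qs) = embed1 n q M * prod_on n M qs"
  unfolding prod_on_def by simp

lemma prod_on_X: "set qs \<subseteq> {..<n} \<Longrightarrow> prod_on n sigX qs = xop n (odds qs)"
proof (induction qs)
  case Nil then show ?case by (simp add: prod_on_def xop_empty)
next
  case (Cons q qs)
  then show ?case by (simp add: prod_on_Cons embed1_X xop_mult)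
qed

lemma prod_on_Z: "set qs \<subseteq> {..<n} \<Longrightarrow> prod_on n sigZ qs = zop n (odds qs)"
proof (induction qs)
  case Nil then show ?case by (simp add: prod_on_def zop_empty)
next
  case (Cons q qs)
  then show ?case by (simp add: prod_on_Cons embed1_Z zop_mult)
qed

definition cnt :: "nat set \<Rightarrow> nat list \<Rightarrow> nat" where
  "cnt S qs = length (filter (\<lambda>q. q \<in> S) qs)"

lemma cnt_Nil[simp]: "cnt S [] = 0" and cnt_Cons[simp]: "cnt S (q # qs) = (if q \<in> S then Suc (cnt S qs) else cnt S qs)"
  unfolding cnt_def by auto

lemma odds_parity: "even (card (S \<inter> odds qs) + cnt S qs)"
proof (induction qs)
  case Nil then show ?case by simp
next
  case (Cons q qs)
  let ?X = "odds qs"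
  have fin: "finite (S \<inter> ?X)" by simp
  show ?case
  proof (cases "q \<in> S")
    case False
    then have "S \<inter> odds (q # qs) = S \<inter> ?X" by (auto simp: sd_def)
    then show ?thesis using Cons False by simp
  next
    case qS: True
    show ?thesis
    proof (cases "q \<in> ?X")
      case True
      then have e: "S \<inter> odds (q # qs) = (S \<inter> ?X) - {q}" by (auto simp: sd_def)
      have "card (S \<inter> ?X) \<ge> 1" using True qS fin by (metis IntI card_0_eq empty_iff less_one linorder_not_less)
      then show ?thesis using Cons qS True e fin by (simp add: card_Diff_singleton)
    next
      case False
      then have e: "S \<inter> odds (q # qs) = insert q (S \<inter> ?X)" using qS by (auto simp: sd_def)
      then show ?thesis using Cons qS False fin by simp
    qed
  qed
qed

lemma sg_odds: "sg S (odds qs) = (-1) ^ cnt S qs"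
proof -
  have "even (card (S \<inter> odds qs) + cnt S qs)" by (rule odds_parity)
  then show ?thesis unfolding sg_def
    by (metis (no_types, lifting) add.commute minus_one_power_iff odd_add)
qed

lemma sg_comm: "sg S T = sg T S"
  unfolding sg_def by (simp add: Int_commute)

lemma sg_empty[simp]: "sg {} T = 1" "sg S {} = 1"
  unfolding sg_def by auto

lemma massoc: "A \<in> carrier_mat N N \<Longrightarrow> B \<in> carrier_mat N N \<Longrightarrow> C \<in> carrier_mat N N \<Longrightarrow> A * B * C = A * (B * C)"
  by (rule assoc_mult_mat)

lemma sqmult: "A \<in> carrier_mat N N \<Longrightarrow> B \<in> carrier_mat N N \<Longrightarrow> A * B \<in> carrier_mat N N"
  by (rule mult_carrier_mat)

lemma smult_l: "A \<in> carrier_mat N N \<Longrightarrow> B \<in> carrier_mat N N \<Longrightarrow> (k \<cdot>\<^sub>m A) * B = (k::complex) \<cdot>\<^sub>m (A * B)"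
  by (rule mult_smult_assoc_mat)
lemma smult_r: "A \<in> carrier_mat N N \<Longrightarrow> B \<in> carrier_mat N N \<Longrightarrow> A * (k \<cdot>\<^sub>m B) = (k::complex) \<cdot>\<^sub>m (A * B)"
  by (rule mult_smult_distrib)
lemma sqsmult: "A \<in> carrier_mat N N \<Longrightarrow> k \<cdot>\<^sub>m A \<in> carrier_mat N N"
  by simp

definition pstr :: "nat \<Rightarrow> nat set \<Rightarrow> nat set \<Rightarrow> complex mat" where
  "pstr n S T = xop n S * zop n T"

lemma pstr_carrier[simp]: "pstr n S T \<in> carrier_mat (2^n) (2^n)"
  unfolding pstr_def by (rule mult_carrier_mat) auto

lemma pstr_mult:
  assumes "T \<subseteq> {..<n}" "finite T" "finite T'"
  shows "pstr n S T * pstr n S' T' = sg S' T \<cdot>\<^sub>m pstr n (sd S S') (sd T T')"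
proof -
  have "pstr n S T * pstr n S' T' = xop n S * ((zop n T * xop n S') * zop n T')"
    unfolding pstr_def by (simp add: massoc[where N="2^n"] sqmult[where N="2^n"])
  also have "\<dots> = xop n S * ((sg S' T \<cdot>\<^sub>m (xop n S' * zop n T)) * zop n T')"
    by (simp add: zop_xop[OF assms(1)])
  also have "\<dots> = sg S' T \<cdot>\<^sub>m ((xop n S * xop n S') * (zop n T * zop n T'))"
    by (simp add: smult_l[where N="2^n"] smult_r[where N="2^n"] massoc[where N="2^n"] sqmult[where N="2^n"])
  finally show ?thesis unfolding pstr_def by (simp add: xop_mult zop_mult assms)
qed

lemma sd_comm: "sd S T = sd T S" unfolding sd_def by auto
lemma sd_self[simp]: "sd S S = {}" unfolding sd_def by auto
lemma sd_empty[simp]: "sd S {} = S" "sd {} S = S" unfolding sd_def by auto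

lemma pstr_empty: "pstr n {} {} = 1\<^sub>m (2^n)"
  unfolding pstr_def by (simp add: xop_empty zop_empty)

lemma pstr_comm:
  assumes "T \<subseteq> {..<n}" "T' \<subseteq> {..<n}" "sg S' T = sg S T'"
  shows "pstr n S T * pstr n S' T' = pstr n S' T' * pstr n S T"
proof -
  have f: "finite T" "finite T'" using assms finite_subset by blast+
  show ?thesis using assms f
    by (simp add: pstr_mult sd_comm)
qed

lemma pstr_sq:
  assumes "T \<subseteq> {..<n}" "sg S T = 1"
  shows "pstr n S T * pstr n S T = 1\<^sub>m (2^n)"
proof -
  have f: "finite T" using assms finite_subset by blast
  have "1 \<cdot>\<^sub>m 1\<^sub>m (2^n) = (1\<^sub>m (2^n) :: complex mat)" by (rule eq_matI) auto
  then show ?thesis using assms f by (simp add: pstr_mult pstr_empty)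
qed

lemma pstr_X: "pstr n S {} = xop n S"
  unfolding pstr_def by (simp add: zop_empty)
lemma pstr_Z: "pstr n {} T = zop n T"
  unfolding pstr_def by (simp add: xop_empty)

lemma adjoint_index:
  assumes "A \<in> carrier_mat N N" "i < N" "j < N"
  shows "mat_adjoint A $$ (i,j) = cnj (A $$ (j,i))"
  using assms unfolding mat_adjoint_def by (simp add: mat_of_rows_index)

lemma adjoint_dims: "A \<in> carrier_mat N N \<Longrightarrow> mat_adjoint A \<in> carrier_mat N N"
  unfolding mat_adjoint_def by (simp add: mat_of_rows_def)

lemma adjoint_self:
  assumes "A \<in> carrier_mat N N" "\<And>i j. i < N \<Longrightarrow> j < N \<Longrightarrow> cnj (A $$ (j,i)) = A $$ (i,j)"
  shows "mat_adjoint A = A"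
  by (rule eq_matI) (use assms adjoint_dims[OF assms(1)] in \<open>auto simp: adjoint_index\<close>)

lemma adjoint_xop: "mat_adjoint (xop n S) = xop n S"
  by (rule adjoint_self[OF xop_carrier]) (auto simp: xop_index sim_sym)

lemma zsgn_real: "cnj (zsgn T i) = zsgn T i"
  unfolding zsgn_def cnj_prod by (rule prod.cong) auto

lemma adjoint_zop: "mat_adjoint (zop n S) = zop n S"
  by (rule adjoint_self[OF zop_carrier]) (auto simp: zop_index zsgn_real)

lemma adjoint_one: "mat_adjoint (1\<^sub>m N) = (1\<^sub>m N :: complex mat)"
  by (rule adjoint_self) auto


lemma mtrace_prod:
  assumes "A \<in> carrier_mat N N" "B \<in> carrier_mat N N"
  shows "mtrace (A * B) = (\<Sum>i<N. \<Sum>k<N. A $$ (i,k) * B $$ (k,i))"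
proof -
  have d: "dim_row (A * B) = N" using assms by simp
  have "mtrace (A * B) = (\<Sum>i<N. (A * B) $$ (i,i))" unfolding mtrace_def d ..
  also have "\<dots> = (\<Sum>i<N. \<Sum>k<N. A $$ (i,k) * B $$ (k,i))"
    by (rule sum.cong[OF refl], rule mult_entry[OF assms]) auto
  finally show ?thesis .
qed

lemma mtrace_comm:
  assumes "A \<in> carrier_mat N N" "B \<in> carrier_mat N N"
  shows "mtrace (A * B) = mtrace (B * A)"
  unfolding mtrace_prod[OF assms] mtrace_prod[OF assms(2,1)]
  by (subst sum.swap) (simp add: mult.commute)

lemma mtrace_add_r:
  assumes "Ob \<in> carrier_mat N N" "A \<in> carrier_mat N N" "B \<in> carrier_mat N N"
  shows "mtrace (Ob * (A + B)) = mtrace (Ob * A) + mtrace (Ob * B)"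
  using assms by (simp add: mtrace_prod distrib_left sum.distrib)

lemma mtrace_minus_r:
  assumes "Ob \<in> carrier_mat N N" "A \<in> carrier_mat N N" "B \<in> carrier_mat N N"
  shows "mtrace (Ob * (A - B)) = mtrace (Ob * A) - mtrace (Ob * B)"
  using assms by (simp add: mtrace_prod[where N=N] minus_carrier_mat right_diff_distrib sum_subtractf)

lemma mtrace_sum_mat:
  assumes "Ob \<in> carrier_mat N N" "\<And>s. s \<in> A \<Longrightarrow> F s \<in> carrier_mat N N"
  shows "mtrace (Ob * mat N N (\<lambda>(i,j). \<Sum>s\<in>A. F s $$ (i,j))) = (\<Sum>s\<in>A. mtrace (Ob * F s))"
proof -
  have "mtrace (Ob * mat N N (\<lambda>(i,j). \<Sum>s\<in>A. F s $$ (i,j)))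
      = (\<Sum>i<N. \<Sum>k<N. Ob $$ (i,k) * (\<Sum>s\<in>A. F s $$ (k,i)))"
    using assms by (simp add: mtrace_prod)
  also have "\<dots> = (\<Sum>i<N. \<Sum>s\<in>A. \<Sum>k<N. Ob $$ (i,k) * F s $$ (k,i))"
    unfolding sum_distrib_left by (rule sum.cong[OF refl], rule sum.swap)
  also have "\<dots> = (\<Sum>s\<in>A. \<Sum>i<N. \<Sum>k<N. Ob $$ (i,k) * F s $$ (k,i))"
    by (rule sum.swap)
  also have "\<dots> = (\<Sum>s\<in>A. mtrace (Ob * F s))"
    using assms by (simp add: mtrace_prod)
  finally show ?thesis .
qed

lemma mtrace_smult_r:
  assumes "Ob \<in> carrier_mat N N" "A \<in> carrier_mat N N"
  shows "mtrace (Ob * (c \<cdot>\<^sub>m A)) = c * mtrace (Ob * A)"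
  using assms by (simp add: mtrace_prod sum_distrib_left mult.left_commute)

lemma smult_smult_mat: "a \<cdot>\<^sub>m (b \<cdot>\<^sub>m A) = (a * b :: 'a::comm_semiring_1) \<cdot>\<^sub>m A"
  by (rule eq_matI) (auto simp: mult.assoc)

lemma proj_idem:
  fixes S :: "complex mat"
  assumes S: "S \<in> carrier_mat N N" and SS: "S * S = 1\<^sub>m N" and s: "s * s = 1"
  shows "((1/2) \<cdot>\<^sub>m (1\<^sub>m N + s \<cdot>\<^sub>m S)) * ((1/2) \<cdot>\<^sub>m (1\<^sub>m N + s \<cdot>\<^sub>m S)) = (1/2) \<cdot>\<^sub>m (1\<^sub>m N + s \<cdot>\<^sub>m S)"
proof -
  let ?Q = "1\<^sub>m N + s \<cdot>\<^sub>m S"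
  have Q: "?Q \<in> carrier_mat N N" using S by simp
  have "S * ?Q = S * 1\<^sub>m N + S * (s \<cdot>\<^sub>m S)"
    by (rule mult_add_distrib_mat[OF S]) (use S in auto)
  also have "\<dots> = S + s \<cdot>\<^sub>m 1\<^sub>m N" using S SS by (simp add: smult_r[where N=N])
  finally have SQ: "S * ?Q = S + s \<cdot>\<^sub>m 1\<^sub>m N" .
  have "?Q * ?Q = 1\<^sub>m N * ?Q + (s \<cdot>\<^sub>m S) * ?Q"
    by (rule add_mult_distrib_mat) (use S in auto)
  also have "\<dots> = ?Q + s \<cdot>\<^sub>m (S + s \<cdot>\<^sub>m 1\<^sub>m N)"
    using S Q SQ by (simp add: smult_l[where N=N])
  finally have QQ: "?Q * ?Q = ?Q + s \<cdot>\<^sub>m (S + s \<cdot>\<^sub>m 1\<^sub>m N)" .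
  have "((1/2) \<cdot>\<^sub>m ?Q) * ((1/2) \<cdot>\<^sub>m ?Q) = (1/4) \<cdot>\<^sub>m (?Q * ?Q)"
    using Q by (simp add: smult_l[where N=N] smult_r[where N=N] smult_smult_mat sqmult[where N=N])
  also have "\<dots> = (1/2) \<cdot>\<^sub>m ?Q"
  proof (rule eq_matI)
    fix i j assume "i < dim_row ((1/2) \<cdot>\<^sub>m ?Q)" "j < dim_col ((1/2) \<cdot>\<^sub>m ?Q)"
    then have i: "i < N" and j: "j < N" using S by auto
    show "((1/4) \<cdot>\<^sub>m (?Q * ?Q)) $$ (i,j) = ((1/2) \<cdot>\<^sub>m ?Q) $$ (i,j)"
      unfolding QQ using i j S s by (auto simp: field_simps)
  qed (use S in auto)
  finally show ?thesis .
qed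

lemma proj_comm:
  fixes S Ob :: "complex mat"
  assumes S: "S \<in> carrier_mat N N" and Ob: "Ob \<in> carrier_mat N N" and OS: "Ob * S = S * Ob"
  shows "Ob * ((1/2) \<cdot>\<^sub>m (1\<^sub>m N + s \<cdot>\<^sub>m S)) = ((1/2) \<cdot>\<^sub>m (1\<^sub>m N + s \<cdot>\<^sub>m S)) * Ob"
proof -
  have "Ob * (1\<^sub>m N + s \<cdot>\<^sub>m S) = Ob * 1\<^sub>m N + Ob * (s \<cdot>\<^sub>m S)"
    by (rule mult_add_distrib_mat[OF Ob]) (use S in auto)
  also have "\<dots> = Ob + s \<cdot>\<^sub>m (S * Ob)" using Ob S OS by (simp add: smult_r[where N=N])
  also have "\<dots> = 1\<^sub>m N * Ob + (s \<cdot>\<^sub>m S) * Ob" using Ob S by (simp add: smult_l[where N=N])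
  also have "\<dots> = (1\<^sub>m N + s \<cdot>\<^sub>m S) * Ob"
    by (rule add_mult_distrib_mat[symmetric]) (use S Ob in auto)
  finally have "Ob * (1\<^sub>m N + s \<cdot>\<^sub>m S) = (1\<^sub>m N + s \<cdot>\<^sub>m S) * Ob" .
  then show ?thesis using Ob S by (simp add: smult_l[where N=N] smult_r[where N=N])
qed

lemma tr_proj:
  assumes Ob: "Ob \<in> carrier_mat N N" and P: "P \<in> carrier_mat N N" and X: "X \<in> carrier_mat N N"
    and OP: "Ob * P = P * Ob" and PP: "P * P = P"
  shows "mtrace (Ob * (P * X * P)) = mtrace (Ob * (P * X))"
proof -
  have "mtrace (Ob * (P * X * P)) = mtrace ((Ob * (P * X)) * P)"
    using Ob P X by (simp add: massoc[where N=N] sqmult[where N=N])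
  also have "\<dots> = mtrace (P * (Ob * (P * X)))"
    by (rule mtrace_comm) (use Ob P X in \<open>auto simp: sqmult[where N=N]\<close>)
  also have "\<dots> = mtrace ((P * Ob) * P * X)"
    using Ob P X by (simp add: massoc[where N=N] sqmult[where N=N])
  also have "\<dots> = mtrace (Ob * (P * P) * X)"
    using Ob P X by (simp add: OP[symmetric] massoc[where N=N] sqmult[where N=N])
  finally show ?thesis using PP Ob P X by (simp add: massoc[where N=N] sqmult[where N=N])
qed

lemma tr_conj:
  assumes Ob: "Ob \<in> carrier_mat N N" and C: "C \<in> carrier_mat N N" and X: "X \<in> carrier_mat N N"
    and OC: "Ob * C = C * Ob" and CC: "C * C = 1\<^sub>m N"
  shows "mtrace (Ob * (C * X * C)) = mtrace (Ob * X)"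
proof -
  have "mtrace (Ob * (C * X * C)) = mtrace ((Ob * (C * X)) * C)"
    using Ob C X by (simp add: massoc[where N=N] sqmult[where N=N])
  also have "\<dots> = mtrace (C * (Ob * (C * X)))"
    by (rule mtrace_comm) (use Ob C X in \<open>auto simp: sqmult[where N=N]\<close>)
  also have "\<dots> = mtrace ((C * Ob) * C * X)"
    using Ob C X by (simp add: massoc[where N=N] sqmult[where N=N])
  also have "\<dots> = mtrace (Ob * (C * C) * X)"
    using Ob C X by (simp add: OC[symmetric] massoc[where N=N] sqmult[where N=N])
  finally show ?thesis using CC Ob C X by simp
qed

lemma chan_trace:
  fixes Ob S C \<rho> :: "complex mat"
  assumes Ob: "Ob \<in> carrier_mat N N" and S: "S \<in> carrier_mat N N" and C: "C \<in> carrier_mat N N"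
    and R: "\<rho> \<in> carrier_mat N N"
    and OS: "Ob * S = S * Ob" and OC: "Ob * C = C * Ob" and SS: "S * S = 1\<^sub>m N" and CC: "C * C = 1\<^sub>m N"
    and CA: "mat_adjoint C = C"
  shows "mtrace (Ob * ((1/2) \<cdot>\<^sub>m (1\<^sub>m N + S) * \<rho> * ((1/2) \<cdot>\<^sub>m (1\<^sub>m N + S))
      + C * ((1/2) \<cdot>\<^sub>m (1\<^sub>m N - S)) * \<rho> * ((1/2) \<cdot>\<^sub>m (1\<^sub>m N - S)) * mat_adjoint C)) = mtrace (Ob * \<rho>)"
proof -
  have e1: "1\<^sub>m N + S = 1\<^sub>m N + (1::complex) \<cdot>\<^sub>m S" by (rule eq_matI) (use S in auto)
  have e2: "1\<^sub>m N - S = 1\<^sub>m N + (-1::complex) \<cdot>\<^sub>m S"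
    by (rule eq_matI) (use S in auto)
  define Pp where "Pp = (1/2) \<cdot>\<^sub>m (1\<^sub>m N + (1::complex) \<cdot>\<^sub>m S)"
  define Pm where "Pm = (1/2) \<cdot>\<^sub>m (1\<^sub>m N + (-1::complex) \<cdot>\<^sub>m S)"
  have Pp: "Pp \<in> carrier_mat N N" and Pm: "Pm \<in> carrier_mat N N" unfolding Pp_def Pm_def using S by auto
  have PPp: "Pp * Pp = Pp" unfolding Pp_def by (rule proj_idem[OF S SS]) simp
  have PPm: "Pm * Pm = Pm" unfolding Pm_def by (rule proj_idem[OF S SS]) simp
  have OPp: "Ob * Pp = Pp * Ob" unfolding Pp_def by (rule proj_comm[OF S Ob OS])
  have OPm: "Ob * Pm = Pm * Ob" unfolding Pm_def by (rule proj_comm[OF S Ob OS])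
  have sum1: "Pp + Pm = 1\<^sub>m N"
    unfolding Pp_def Pm_def by (rule eq_matI) (use S in \<open>auto simp: field_simps\<close>)
  have "mtrace (Ob * (Pp * \<rho> * Pp + C * Pm * \<rho> * Pm * C))
      = mtrace (Ob * (Pp * \<rho> * Pp)) + mtrace (Ob * (C * (Pm * \<rho> * Pm) * C))"
    using Ob Pp Pm C R by (simp add: mtrace_add_r[where N=N] sqmult[where N=N] massoc[where N=N])
  also have "\<dots> = mtrace (Ob * (Pp * \<rho>)) + mtrace (Ob * (Pm * \<rho>))"
    using tr_proj[OF Ob Pp R OPp PPp] tr_proj[OF Ob Pm R OPm PPm]
      tr_conj[OF Ob C _ OC CC, of "Pm * \<rho> * Pm"] Pm R by (simp add: sqmult[where N=N])
  also have "\<dots> = mtrace (Ob * (Pp * \<rho> + Pm * \<rho>))"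
    using Ob Pp Pm R by (simp add: mtrace_add_r[where N=N] sqmult[where N=N])
  also have "Pp * \<rho> + Pm * \<rho> = \<rho>"
    using add_mult_distrib_mat[OF Pp Pm R, symmetric] sum1 R by simp
  finally show ?thesis unfolding e1 e2 CA Pp_def[symmetric] Pm_def[symmetric] .
qed


definition mn :: "nat \<Rightarrow> complex mat \<Rightarrow> real" where
  "mn N A = (\<Sum>i<N. \<Sum>j<N. norm (A $$ (i,j)))"

lemma mn_nonneg: "mn N A \<ge> 0"
  unfolding mn_def by (intro sum_nonneg) auto

lemma entry_le_mn: assumes "i < N" "j < N" shows "norm (A $$ (i,j)) \<le> mn N A"
proof -
  have "norm (A $$ (i,j)) \<le> (\<Sum>j'<N. norm (A $$ (i,j')))"
    by (rule member_le_sum[where f="\<lambda>j'. norm (A $$ (i,j'))"]) (use assms in auto)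
  also have "\<dots> \<le> mn N A" unfolding mn_def
    by (rule member_le_sum[where f="\<lambda>i'. \<Sum>j'<N. norm (A $$ (i',j'))"]) (use assms in \<open>auto intro: sum_nonneg\<close>)
  finally show ?thesis .
qed

lemma mn_mult:
  assumes A: "A \<in> carrier_mat N N" and B: "B \<in> carrier_mat N N"
  shows "mn N (A * B) \<le> mn N A * mn N B"
proof -
  have "mn N (A * B) = (\<Sum>i<N. \<Sum>j<N. norm (\<Sum>k<N. A $$ (i,k) * B $$ (k,j)))"
    unfolding mn_def by (intro sum.cong refl) (simp add: mult_entry[OF A B])
  also have "\<dots> \<le> (\<Sum>i<N. \<Sum>j<N. \<Sum>k<N. norm (A $$ (i,k)) * norm (B $$ (k,j)))"
    by (intro sum_mono order.trans[OF norm_sum]) (simp add: norm_mult)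
  also have "\<dots> = (\<Sum>i<N. \<Sum>k<N. norm (A $$ (i,k)) * (\<Sum>j<N. norm (B $$ (k,j))))"
    by (rule sum.cong[OF refl]) (subst sum.swap, simp add: sum_distrib_left)
  also have "\<dots> \<le> (\<Sum>i<N. \<Sum>k<N. norm (A $$ (i,k)) * mn N B)"
  proof (intro sum_mono mult_left_mono)
    fix k assume "k \<in> {..<N}"
    then show "(\<Sum>j<N. norm (B $$ (k,j))) \<le> mn N B" unfolding mn_def
      by (intro member_le_sum[where f="\<lambda>i'. \<Sum>j'<N. norm (B $$ (i',j'))"]) (auto intro: sum_nonneg)
  qed simp
  also have "\<dots> = mn N A * mn N B" unfolding mn_def by (simp add: sum_distrib_right)
  finally show ?thesis .
qed

lemma mn_add: assumes "A \<in> carrier_mat N N" "B \<in> carrier_mat N N"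
  shows "mn N (A + B) \<le> mn N A + mn N B"
proof -
  have "mn N (A + B) \<le> (\<Sum>i<N. \<Sum>j<N. norm (A $$ (i,j)) + norm (B $$ (i,j)))"
    unfolding mn_def using assms by (intro sum_mono) (simp add: norm_triangle_ineq)
  also have "\<dots> = mn N A + mn N B" unfolding mn_def by (simp add: sum.distrib)
  finally show ?thesis .
qed

lemma mn_minus: assumes "A \<in> carrier_mat N N" "B \<in> carrier_mat N N"
  shows "mn N (A - B) \<le> mn N A + mn N B"
proof -
  have "mn N (A - B) \<le> (\<Sum>i<N. \<Sum>j<N. norm (A $$ (i,j)) + norm (B $$ (i,j)))"
    unfolding mn_def using assms by (intro sum_mono) (simp add: norm_triangle_ineq4)
  also have "\<dots> = mn N A + mn N B" unfolding mn_def by (simp add: sum.distrib)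
  finally show ?thesis .
qed

lemma mn_adjoint: assumes "A \<in> carrier_mat N N"
  shows "mn N (mat_adjoint A) = mn N A"
proof -
  have "mn N (mat_adjoint A) = (\<Sum>i<N. \<Sum>j<N. norm (A $$ (j,i)))"
    unfolding mn_def by (intro sum.cong refl) (simp add: adjoint_index[OF assms])
  also have "\<dots> = mn N A" unfolding mn_def by (rule sum.swap)
  finally show ?thesis .
qed

lemma mn_sum_mat:
  assumes "finite A"
  shows "mn N (mat N N (\<lambda>(i,j). \<Sum>s\<in>A. F s $$ (i,j))) \<le> (\<Sum>s\<in>A. mn N (F s))"
proof -
  have "mn N (mat N N (\<lambda>(i,j). \<Sum>s\<in>A. F s $$ (i,j))) = (\<Sum>i<N. \<Sum>j<N. norm (\<Sum>s\<in>A. F s $$ (i,j)))"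
    unfolding mn_def by simp
  also have "\<dots> \<le> (\<Sum>i<N. \<Sum>j<N. \<Sum>s\<in>A. norm (F s $$ (i,j)))"
    by (intro sum_mono norm_sum)
  also have "\<dots> = (\<Sum>s\<in>A. mn N (F s))"
    unfolding mn_def by (subst sum.swap, rule sum.cong[OF refl], subst sum.swap, rule refl)
  finally show ?thesis .
qed

lemma pow_carrier:
  fixes F :: "'a mat \<Rightarrow> 'a mat"
  assumes "\<rho> \<in> carrier_mat N N" "\<And>X. X \<in> carrier_mat N N \<Longrightarrow> F X \<in> carrier_mat N N"
  shows "(F ^^ k) \<rho> \<in> carrier_mat N N"
proof (induction k)
  case 0 show ?case using assms(1) by simp
next
  case (Suc k)
  have "(F ^^ Suc k) \<rho> = F ((F ^^ k) \<rho>)" by simp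
  then show ?case using assms(2)[OF Suc.IH] by simp
qed

lemma pow_bound:
  fixes F :: "complex mat \<Rightarrow> complex mat"
  assumes "\<rho> \<in> carrier_mat N N" "\<And>X. X \<in> carrier_mat N N \<Longrightarrow> F X \<in> carrier_mat N N"
    and "\<And>X. X \<in> carrier_mat N N \<Longrightarrow> mn N (F X) \<le> K * mn N X" and "K \<ge> 0"
  shows "mn N ((F ^^ k) \<rho>) \<le> K ^ k * mn N \<rho>"
proof (induction k)
  case 0 then show ?case by simp
next
  case (Suc k)
  have c: "(F ^^ k) \<rho> \<in> carrier_mat N N" by (rule pow_carrier) (use assms in auto)
  have "mn N ((F ^^ Suc k) \<rho>) \<le> K * mn N ((F ^^ k) \<rho>)" using assms(3)[OF c] by simp
  also have "\<dots> \<le> K * (K ^ k * mn N \<rho>)" using Suc assms(4) by (rule mult_left_mono)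
  finally show ?case by (simp add: mult.assoc)
qed

lemma exp_trace:
  fixes F :: "complex mat \<Rightarrow> complex mat"
  assumes Ob: "Ob \<in> carrier_mat N N" and R: "\<rho> \<in> carrier_mat N N"
    and Fc: "\<And>X. X \<in> carrier_mat N N \<Longrightarrow> F X \<in> carrier_mat N N"
    and Fb: "\<And>X. X \<in> carrier_mat N N \<Longrightarrow> mn N (F X) \<le> K * mn N X" and K: "K \<ge> 0"
    and Ft: "\<And>X. X \<in> carrier_mat N N \<Longrightarrow> mtrace (Ob * F X) = 0"
  shows "mtrace (Ob * mat N N (\<lambda>(i,j). \<Sum>k. complex_of_real (t ^ k / fact k) * ((F ^^ k) \<rho>) $$ (i,j)))
         = mtrace (Ob * \<rho>)"
proof -
  define X where "X k = (F ^^ k) \<rho>" for k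
  define c where "c k = complex_of_real (t ^ k / fact k)" for k
  have Xc: "X k \<in> carrier_mat N N" for k unfolding X_def by (rule pow_carrier[OF R Fc])
  have summ: "summable (\<lambda>k. c k * X k $$ (i,j))" if ij: "i < N" "j < N" for i j
  proof (rule summable_comparison_test'[where N=0])
    show "summable (\<lambda>k. mn N \<rho> * (inverse (fact k) * (\<bar>t\<bar> * K) ^ k))"
      by (intro summable_mult summable_exp)
    fix k :: nat
    have nc: "norm (c k) = \<bar>t\<bar> ^ k / fact k" unfolding c_def norm_of_real by (simp add: power_abs)
    have "norm (c k * X k $$ (i,j)) = \<bar>t\<bar> ^ k / fact k * norm (X k $$ (i,j))"
      unfolding norm_mult nc ..
    also have "\<dots> \<le> \<bar>t\<bar> ^ k / fact k * (K ^ k * mn N \<rho>)"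
      using entry_le_mn[OF ij, of "X k"] pow_bound[OF R Fc Fb K, of k] unfolding X_def
      by (intro mult_left_mono) auto
    also have "\<dots> = mn N \<rho> * (inverse (fact k) * (\<bar>t\<bar> * K) ^ k)"
      by (simp add: field_simps power_mult_distrib)
    finally show "norm (c k * X k $$ (i,j)) \<le> mn N \<rho> * (inverse (fact k) * (\<bar>t\<bar> * K) ^ k)" .
  qed
  have M: "mat N N (\<lambda>(i,j). \<Sum>k. c k * X k $$ (i,j)) \<in> carrier_mat N N" by simp
  have "mtrace (Ob * mat N N (\<lambda>(i,j). \<Sum>k. c k * X k $$ (i,j)))
      = (\<Sum>i<N. \<Sum>l<N. Ob $$ (i,l) * (\<Sum>k. c k * X k $$ (l,i)))"
    using mtrace_prod[OF Ob M] by simp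
  also have "\<dots> = (\<Sum>i<N. \<Sum>l<N. \<Sum>k. Ob $$ (i,l) * (c k * X k $$ (l,i)))"
    by (intro sum.cong refl) (simp add: suminf_mult summ)
  also have "\<dots> = (\<Sum>i<N. \<Sum>k. \<Sum>l<N. Ob $$ (i,l) * (c k * X k $$ (l,i)))"
    by (intro sum.cong refl suminf_sum[symmetric] summable_mult summ) auto
  also have "\<dots> = (\<Sum>k. \<Sum>i<N. \<Sum>l<N. Ob $$ (i,l) * (c k * X k $$ (l,i)))"
    by (intro suminf_sum[symmetric] summable_sum summable_mult summ) auto
  also have "\<dots> = (\<Sum>k. c k * mtrace (Ob * X k))"
    by (intro suminf_cong) (simp add: mtrace_prod[OF Ob Xc] sum_distrib_left mult.left_commute)
  also have "(\<lambda>k. c k * mtrace (Ob * X k)) = (\<lambda>k. if k = 0 then mtrace (Ob * \<rho>) else 0)"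
  proof
    fix k show "c k * mtrace (Ob * X k) = (if k = 0 then mtrace (Ob * \<rho>) else 0)"
    proof (cases k)
      case 0 then show ?thesis by (simp add: c_def X_def)
    next
      case (Suc m)
      have "X k = F (X m)" unfolding X_def Suc by simp
      then show ?thesis using Ft[OF Xc[of m]] Suc by simp
    qed
  qed
  also have "(\<Sum>k. if k = 0 then mtrace (Ob * \<rho>) else 0) = mtrace (Ob * \<rho>)"
    using sums_single[of 0 "\<lambda>_. mtrace (Ob * \<rho>)"] by (simp add: sums_iff)
  finally show ?thesis unfolding c_def X_def .
qed


lemma cmod_lt: "L \<ge> 1 \<Longrightarrow> cmod L x < L"
  unfolding cmod_def by (simp add: nat_less_iff)

lemma cmod_eq: "L \<ge> 1 \<Longrightarrow> cmod L a = cmod L b \<longleftrightarrow> int L dvd (a - b)"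
proof -
  assume L: "L \<ge> 1"
  have "cmod L a = cmod L b \<longleftrightarrow> a mod int L = b mod int L"
    unfolding cmod_def using L by (simp add: eq_nat_nat_iff)
  also have "\<dots> \<longleftrightarrow> int L dvd (a - b)" by (rule mod_eq_dvd_iff)
  finally show ?thesis .
qed

lemma cmod_zero: "L \<ge> 1 \<Longrightarrow> cmod L a = 0 \<longleftrightarrow> int L dvd a"
  using cmod_eq[of L a 0] by (simp add: cmod_def)

lemma cmod_mod: "cmod L (a mod int L) = cmod L a"
  unfolding cmod_def by simp

lemma lin_eq:
  assumes "(b::nat) < L" "d < L" shows "a * L + b = c * L + d \<longleftrightarrow> a = c \<and> b = d"
proof
  assume e: "a * L + b = c * L + d"
  have "(a * L + b) div L = a" "(c * L + d) div L = c" using assms by auto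
  moreover have "(a * L + b) mod L = b" "(c * L + d) mod L = d" using assms by auto
  ultimately show "a = c \<and> b = d" using e by metis
qed auto

lemma hq_eq: "L \<ge> 1 \<Longrightarrow> hq L x y = hq L x' y' \<longleftrightarrow> cmod L x = cmod L x' \<and> cmod L y = cmod L y'"
  unfolding hq_def using lin_eq[of "cmod L x" L "cmod L x'" "cmod L y" "cmod L y'"] cmod_lt by auto

lemma uq_eq: "L \<ge> 1 \<Longrightarrow> uq L x y = uq L x' y' \<longleftrightarrow> cmod L x = cmod L x' \<and> cmod L y = cmod L y'"
  unfolding uq_def using lin_eq[of "cmod L x" L "cmod L x'" "cmod L y" "cmod L y'"] cmod_lt by auto

lemma hq_lt: "L \<ge> 1 \<Longrightarrow> hq L x y < L * L"
proof -
  assume L: "L \<ge> 1"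
  have "cmod L y * L + cmod L x < cmod L y * L + L" using cmod_lt[OF L] by simp
  also have "\<dots> = (cmod L y + 1) * L" by simp
  also have "\<dots> \<le> L * L" using cmod_lt[OF L, of y] by (intro mult_right_mono) auto
  finally show ?thesis unfolding hq_def .
qed

lemma uq_lt: "L \<ge> 1 \<Longrightarrow> uq L x y < nq L"
  using hq_lt[of L x y] unfolding uq_def hq_def nq_def by simp

lemma hq_lt_nq: "L \<ge> 1 \<Longrightarrow> hq L x y < nq L"
  using hq_lt[of L x y] unfolding nq_def by simp

lemma hq_ne_uq: "L \<ge> 1 \<Longrightarrow> hq L x y \<noteq> uq L x' y'"
  using hq_lt[of L x y] unfolding uq_def by simp

lemma hq_mod: "hq L (x mod int L) (y mod int L) = hq L x y"
  unfolding hq_def by (simp add: cmod_mod)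
lemma uq_mod: "uq L (x mod int L) (y mod int L) = uq L x y"
  unfolding uq_def by (simp add: cmod_mod)

definition X1s where "X1s L = insert (qA1 L) (qB L)"
definition Z1s where "Z1s L = insert (qA1 L) (qC L)"
definition X2s where "X2s L = insert (qA2 L) (qB' L)"
definition Z2s where "Z2s L = insert (qA2 L) (qC' L)"

lemma modrange: "L \<ge> 1 \<Longrightarrow> 0 \<le> y mod int L \<and> y mod int L < int L"
  by simp

lemma X1s_char: assumes L: "L \<ge> 1" shows "q \<in> X1s L \<longleftrightarrow> (\<exists>y. q = hq L 0 y)"
proof
  assume "q \<in> X1s L" then show "\<exists>y. q = hq L 0 y"
    unfolding X1s_def qA1_def qB_def by auto
next
  assume "\<exists>y. q = hq L 0 y"
  then obtain y where q: "q = hq L 0 y" by auto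
  let ?y = "y mod int L"
  have q': "q = hq L 0 ?y" using q hq_mod[of L 0 y] by simp
  show "q \<in> X1s L"
  proof (cases "cmod L ?y = cmod L 1")
    case True then have "q = qA1 L" unfolding qA1_def q' using hq_eq[OF L] by simp
    then show ?thesis unfolding X1s_def by simp
  next
    case False then have "q \<in> qB L" unfolding qB_def q' using modrange[OF L, of y] by blast
    then show ?thesis unfolding X1s_def by simp
  qed
qed

lemma Z1s_char: assumes L: "L \<ge> 1" shows "q \<in> Z1s L \<longleftrightarrow> (\<exists>x. q = hq L x 1)"
proof
  assume "q \<in> Z1s L" then show "\<exists>x. q = hq L x 1"
    unfolding Z1s_def qA1_def qC_def by auto
next
  assume "\<exists>x. q = hq L x 1"
  then obtain x where q: "q = hq L x 1" by auto
  let ?x = "x mod int L"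
  have q': "q = hq L ?x 1" using q hq_eq[OF L, of x 1 ?x 1] cmod_mod[of L x] by simp
  show "q \<in> Z1s L"
  proof (cases "cmod L ?x = 0")
    case True then have "q = qA1 L" unfolding qA1_def q' using hq_eq[OF L] by (simp add: cmod_def)
    then show ?thesis unfolding Z1s_def by simp
  next
    case False then have "q \<in> qC L" unfolding qC_def q' using modrange[OF L, of x] by blast
    then show ?thesis unfolding Z1s_def by simp
  qed
qed

lemma X2s_char: assumes L: "L \<ge> 1" shows "q \<in> X2s L \<longleftrightarrow> (\<exists>x. q = uq L x 0)"
proof
  assume "q \<in> X2s L" then show "\<exists>x. q = uq L x 0"
    unfolding X2s_def qA2_def qB'_def by auto
next
  assume "\<exists>x. q = uq L x 0"
  then obtain x where q: "q = uq L x 0" by auto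
  let ?x = "x mod int L"
  have q': "q = uq L ?x 0" using q uq_eq[OF L, of x 0 ?x 0] cmod_mod[of L x] by simp
  show "q \<in> X2s L"
  proof (cases "cmod L ?x = cmod L 1")
    case True then have "q = qA2 L" unfolding qA2_def q' using uq_eq[OF L] by simp
    then show ?thesis unfolding X2s_def by simp
  next
    case False then have "q \<in> qB' L" unfolding qB'_def q' using modrange[OF L, of x] by blast
    then show ?thesis unfolding X2s_def by simp
  qed
qed

lemma Z2s_char: assumes L: "L \<ge> 1" shows "q \<in> Z2s L \<longleftrightarrow> (\<exists>y. q = uq L 1 y)"
proof
  assume "q \<in> Z2s L" then show "\<exists>y. q = uq L 1 y"
    unfolding Z2s_def qA2_def qC'_def by auto
next
  assume "\<exists>y. q = uq L 1 y"
  then obtain y where q: "q = uq L 1 y" by auto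
  let ?y = "y mod int L"
  have q': "q = uq L 1 ?y" using q uq_eq[OF L, of 1 y 1 ?y] cmod_mod[of L y] by simp
  show "q \<in> Z2s L"
  proof (cases "cmod L ?y = 0")
    case True then have "q = qA2 L" unfolding qA2_def q' using uq_eq[OF L] by (simp add: cmod_def)
    then show ?thesis unfolding Z2s_def by simp
  next
    case False then have "q \<in> qC' L" unfolding qC'_def q' using modrange[OF L, of y] by blast
    then show ?thesis unfolding Z2s_def by simp
  qed
qed

lemma hq_X1s: "L \<ge> 1 \<Longrightarrow> hq L a b \<in> X1s L \<longleftrightarrow> int L dvd a"
  using X1s_char[of L] hq_eq[of L] cmod_zero[of L] by (auto simp: cmod_def)
lemma uq_X1s: "L \<ge> 1 \<Longrightarrow> uq L a b \<notin> X1s L"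
  using X1s_char[of L] hq_ne_uq[of L] by metis
lemma hq_Z1s: assumes L: "L \<ge> 1" shows "hq L a b \<in> Z1s L \<longleftrightarrow> int L dvd (b - 1)"
proof -
  have "hq L a b \<in> Z1s L \<longleftrightarrow> (\<exists>x. hq L a b = hq L x 1)" by (rule Z1s_char[OF L])
  also have "\<dots> \<longleftrightarrow> cmod L b = cmod L 1" using hq_eq[OF L] by auto
  finally show ?thesis using cmod_eq[OF L] by simp
qed
lemma uq_Z1s: "L \<ge> 1 \<Longrightarrow> uq L a b \<notin> Z1s L"
  using Z1s_char[of L] hq_ne_uq[of L] by metis
lemma uq_X2s: "L \<ge> 1 \<Longrightarrow> uq L a b \<in> X2s L \<longleftrightarrow> int L dvd b"
  using X2s_char[of L] uq_eq[of L] cmod_zero[of L] by (auto simp: cmod_def)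
lemma hq_X2s: "L \<ge> 1 \<Longrightarrow> hq L a b \<notin> X2s L"
  using X2s_char[of L] hq_ne_uq[of L] by metis
lemma uq_Z2s: assumes L: "L \<ge> 1" shows "uq L a b \<in> Z2s L \<longleftrightarrow> int L dvd (a - 1)"
proof -
  have "uq L a b \<in> Z2s L \<longleftrightarrow> (\<exists>y. uq L a b = uq L 1 y)" by (rule Z2s_char[OF L])
  also have "\<dots> \<longleftrightarrow> cmod L a = cmod L 1" using uq_eq[OF L] by auto
  finally show ?thesis using cmod_eq[OF L] by simp
qed
lemma hq_Z2s: "L \<ge> 1 \<Longrightarrow> hq L a b \<notin> Z2s L"
  using Z2s_char[of L] hq_ne_uq[of L] by metis


lemma one_smult: "1 \<cdot>\<^sub>m A = (A :: complex mat)"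
  by (rule eq_matI) auto

lemma sets_lt:
  assumes L: "L \<ge> 1"
  shows "X1s L \<subseteq> {..<nq L}" "Z1s L \<subseteq> {..<nq L}" "X2s L \<subseteq> {..<nq L}" "Z2s L \<subseteq> {..<nq L}"
proof -
  show "X1s L \<subseteq> {..<nq L}" using X1s_char[OF L] hq_lt_nq[OF L] by auto
  show "Z1s L \<subseteq> {..<nq L}" using Z1s_char[OF L] hq_lt_nq[OF L] by auto
  show "X2s L \<subseteq> {..<nq L}" using X2s_char[OF L] uq_lt[OF L] by auto
  show "Z2s L \<subseteq> {..<nq L}" using Z2s_char[OF L] uq_lt[OF L] by auto
qed

lemma sets_fin:
  assumes L: "L \<ge> 1"
  shows "finite (X1s L)" "finite (Z1s L)" "finite (X2s L)" "finite (Z2s L)"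
  using sets_lt[OF L] finite_subset by blast+

lemma qA1_notin_qB: "L \<ge> 1 \<Longrightarrow> qA1 L \<notin> qB L"
  unfolding qA1_def qB_def using hq_eq by auto
lemma qA1_notin_qC: "L \<ge> 1 \<Longrightarrow> qA1 L \<notin> qC L"
  unfolding qA1_def qC_def using hq_eq by (auto simp: cmod_def)
lemma qA2_notin_qB': "L \<ge> 1 \<Longrightarrow> qA2 L \<notin> qB' L"
  unfolding qA2_def qB'_def using uq_eq by auto
lemma qA2_notin_qC': "L \<ge> 1 \<Longrightarrow> qA2 L \<notin> qC' L"
  unfolding qA2_def qC'_def using uq_eq by (auto simp: cmod_def)

lemma prod_on_X_set:
  assumes "q \<notin> Q" "finite Q" "insert q Q \<subseteq> {..<n}"
  shows "prod_on n sigX (q # sorted_list_of_set Q) = xop n (insert q Q)"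
proof -
  have "prod_on n sigX (q # sorted_list_of_set Q) = xop n (odds (q # sorted_list_of_set Q))"
    by (rule prod_on_X) (use assms in auto)
  also have "odds (q # sorted_list_of_set Q) = insert q Q"
    by (subst odds_distinct) (use assms in auto)
  finally show ?thesis .
qed

lemma prod_on_Z_set:
  assumes "q \<notin> Q" "finite Q" "insert q Q \<subseteq> {..<n}"
  shows "prod_on n sigZ (q # sorted_list_of_set Q) = zop n (insert q Q)"
proof -
  have "prod_on n sigZ (q # sorted_list_of_set Q) = zop n (odds (q # sorted_list_of_set Q))"
    by (rule prod_on_Z) (use assms in auto)
  also have "odds (q # sorted_list_of_set Q) = insert q Q"
    by (subst odds_distinct) (use assms in auto)
  finally show ?thesis .
qed

lemma logX1_eq: "L \<ge> 1 \<Longrightarrow> logX1 L = xop (nq L) (X1s L)"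
  unfolding logX1_def X1s_def
  using prod_on_X_set[OF qA1_notin_qB] sets_fin sets_lt unfolding X1s_def by auto
lemma logZ1_eq: "L \<ge> 1 \<Longrightarrow> logZ1 L = zop (nq L) (Z1s L)"
  unfolding logZ1_def Z1s_def
  using prod_on_Z_set[OF qA1_notin_qC] sets_fin sets_lt unfolding Z1s_def by auto
lemma logX2_eq: "L \<ge> 1 \<Longrightarrow> logX2 L = xop (nq L) (X2s L)"
  unfolding logX2_def X2s_def
  using prod_on_X_set[OF qA2_notin_qB'] sets_fin sets_lt unfolding X2s_def by auto
lemma logZ2_eq: "L \<ge> 1 \<Longrightarrow> logZ2 L = zop (nq L) (Z2s L)"
  unfolding logZ2_def Z2s_def
  using prod_on_Z_set[OF qA2_notin_qC'] sets_fin sets_lt unfolding Z2s_def by auto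

definition hasX :: "pauli \<Rightarrow> bool" where "hasX P \<longleftrightarrow> P = PX \<or> P = PY"
definition hasZ :: "pauli \<Rightarrow> bool" where "hasZ P \<longleftrightarrow> P = PZ \<or> P = PY"
definition ph :: "pauli \<Rightarrow> complex" where "ph P = (if P = PY then \<i> else 1)"

definition SX where "SX L P1 P2 = (if hasX P1 then X1s L else {}) \<union> (if hasX P2 then X2s L else {})"
definition TZ where "TZ L P1 P2 = (if hasZ P1 then Z1s L else {}) \<union> (if hasZ P2 then Z2s L else {})"

lemma logical1_eq: "L \<ge> 1 \<Longrightarrow> logical1 L P = ph P \<cdot>\<^sub>m pstr (nq L) (if hasX P then X1s L else {}) (if hasZ P then Z1s L else {})"
  by (cases P) (simp_all add: logical1_def ph_def hasX_def hasZ_def one_smult pstr_empty pstr_X pstr_Z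
      logX1_eq logZ1_eq pstr_def xop_empty zop_empty)

lemma logical2_eq: "L \<ge> 1 \<Longrightarrow> logical2 L P = ph P \<cdot>\<^sub>m pstr (nq L) (if hasX P then X2s L else {}) (if hasZ P then Z2s L else {})"
  by (cases P) (simp_all add: logical2_def ph_def hasX_def hasZ_def one_smult pstr_empty pstr_X pstr_Z
      logX2_eq logZ2_eq pstr_def xop_empty zop_empty)

lemma disj_sets:
  assumes L: "L \<ge> 1"
  shows "X1s L \<inter> X2s L = {}" "Z1s L \<inter> Z2s L = {}" "X2s L \<inter> Z1s L = {}"
proof -
  show "X1s L \<inter> X2s L = {}" using X1s_char[OF L] X2s_char[OF L] hq_ne_uq[OF L] by auto
  show "Z1s L \<inter> Z2s L = {}" using Z1s_char[OF L] Z2s_char[OF L] hq_ne_uq[OF L] by auto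
  show "X2s L \<inter> Z1s L = {}" using Z1s_char[OF L] X2s_char[OF L] hq_ne_uq[OF L] by (auto simp: eq_commute[of "uq L _ _"])
qed

lemma sd_disj: "A \<inter> B = {} \<Longrightarrow> sd A B = A \<union> B"
  unfolding sd_def by auto

lemma logical_eq:
  assumes L: "L \<ge> 1"
  shows "logical L P1 P2 = (ph P1 * ph P2) \<cdot>\<^sub>m pstr (nq L) (SX L P1 P2) (TZ L P1 P2)"
proof -
  let ?S1 = "if hasX P1 then X1s L else {}" and ?T1 = "if hasZ P1 then Z1s L else {}"
  let ?S2 = "if hasX P2 then X2s L else {}" and ?T2 = "if hasZ P2 then Z2s L else {}"
  have T1: "?T1 \<subseteq> {..<nq L}" "finite ?T1" using sets_lt[OF L] sets_fin[OF L] by auto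
  have T2: "finite ?T2" using sets_fin[OF L] by auto
  have sg1: "sg ?S2 ?T1 = 1" using disj_sets[OF L] unfolding sg_def by auto
  have d1: "sd ?S1 ?S2 = SX L P1 P2" unfolding SX_def using disj_sets[OF L] by (intro sd_disj) auto
  have d2: "sd ?T1 ?T2 = TZ L P1 P2" unfolding TZ_def using disj_sets[OF L] by (intro sd_disj) auto
  have "logical L P1 P2 = (ph P1 \<cdot>\<^sub>m pstr (nq L) ?S1 ?T1) * (ph P2 \<cdot>\<^sub>m pstr (nq L) ?S2 ?T2)"
    unfolding logical_def logical1_eq[OF L] logical2_eq[OF L] ..
  also have "\<dots> = (ph P1 * ph P2) \<cdot>\<^sub>m (pstr (nq L) ?S1 ?T1 * pstr (nq L) ?S2 ?T2)"
    by (simp add: smult_l[where N="2^nq L"] smult_r[where N="2^nq L"] smult_smult_mat sqmult[where N="2^nq L"]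
        mult.commute)
  also have "pstr (nq L) ?S1 ?T1 * pstr (nq L) ?S2 ?T2 = pstr (nq L) (SX L P1 P2) (TZ L P1 P2)"
    using pstr_mult[OF T1 T2, of ?S1 ?S2] sg1 d1 d2 by (simp add: one_smult)
  finally show ?thesis .
qed

lemma SX_hq: "L \<ge> 1 \<Longrightarrow> hq L a b \<in> SX L P1 P2 \<longleftrightarrow> hasX P1 \<and> int L dvd a"
  unfolding SX_def using hq_X1s hq_X2s by auto
lemma SX_uq: "L \<ge> 1 \<Longrightarrow> uq L a b \<in> SX L P1 P2 \<longleftrightarrow> hasX P2 \<and> int L dvd b"
  unfolding SX_def using uq_X1s uq_X2s by auto
lemma TZ_hq: "L \<ge> 1 \<Longrightarrow> hq L a b \<in> TZ L P1 P2 \<longleftrightarrow> hasZ P1 \<and> int L dvd (b - 1)"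
  unfolding TZ_def using hq_Z1s hq_Z2s by auto
lemma TZ_uq: "L \<ge> 1 \<Longrightarrow> uq L a b \<in> TZ L P1 P2 \<longleftrightarrow> hasZ P2 \<and> int L dvd (a - 1)"
  unfolding TZ_def using uq_Z1s uq_Z2s by auto

lemma SX_lt: "L \<ge> 1 \<Longrightarrow> SX L P1 P2 \<subseteq> {..<nq L}"
  unfolding SX_def using sets_lt by auto
lemma TZ_lt: "L \<ge> 1 \<Longrightarrow> TZ L P1 P2 \<subseteq> {..<nq L}"
  unfolding TZ_def using sets_lt by auto


definition cX where "cX L x y = (if int L dvd x \<and> int L dvd y then {} else if int L dvd y then {uq L (x + 1) 0} else {hq L x (y + 1)})"
definition cZ where "cZ L x y = (if int L dvd (x - 1) \<and> int L dvd (y - 1) then {} else if int L dvd (y - 1) then {hq L (x - 1) 1} else {uq L x (y - 1)})"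

lemma cmod_one: "L \<ge> 1 \<Longrightarrow> cmod L a = cmod L 1 \<longleftrightarrow> int L dvd (a - 1)"
  by (rule cmod_eq)

lemma stab_Plaq: assumes L: "L \<ge> 1"
  shows "stab L (Plaq x y) = pstr (nq L) {} (odds [hq L x y, hq L x (y + 1), uq L x y, uq L (x + 1) y])"
  unfolding stab_def pstr_Z using hq_lt_nq[OF L] uq_lt[OF L] by (simp add: prod_on_Z)

lemma stab_Vert: assumes L: "L \<ge> 1"
  shows "stab L (Vert x y) = pstr (nq L) (odds [hq L x y, hq L (x - 1) y, uq L x y, uq L x (y - 1)]) {}"
  unfolding stab_def pstr_X using hq_lt_nq[OF L] uq_lt[OF L] by (simp add: prod_on_X)

lemma corr_Plaq: assumes L: "L \<ge> 1"
  shows "corr L (Plaq x y) = pstr (nq L) (cX L x y) {}"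
  unfolding corr_def cX_def pstr_X using hq_lt_nq[OF L] uq_lt[OF L]
  by (simp add: embed1_X cmod_zero[OF L] xop_empty)

lemma corr_Vert: assumes L: "L \<ge> 1"
  shows "corr L (Vert x y) = pstr (nq L) {} (cZ L x y)"
  unfolding corr_def cZ_def pstr_Z using hq_lt_nq[OF L] uq_lt[OF L]
  by (simp add: embed1_Z cmod_one[OF L] zop_empty)

lemma cX_lt: "L \<ge> 1 \<Longrightarrow> cX L x y \<subseteq> {..<nq L}"
  unfolding cX_def using hq_lt_nq uq_lt by auto
lemma cZ_lt: "L \<ge> 1 \<Longrightarrow> cZ L x y \<subseteq> {..<nq L}"
  unfolding cZ_def using hq_lt_nq uq_lt by auto

lemma odds_lt: "set qs \<subseteq> {..<n} \<Longrightarrow> odds qs \<subseteq> {..<n}"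
  using odds_sub by blast

lemma sg_single: "sg {q} T = (if q \<in> T then -1 else 1)"
  unfolding sg_def by auto

lemma comm_scaled:
  assumes "A * B = B * A" "A \<in> carrier_mat N N" "B \<in> carrier_mat N N"
  shows "(c \<cdot>\<^sub>m A) * B = B * (c \<cdot>\<^sub>m A :: complex mat)"
  using assms by (simp add: smult_l[where N=N] smult_r[where N=N])

lemma neg_one_pow_cases: "((-1::complex) ^ k = 1) \<longleftrightarrow> even k"
  by (simp add: minus_one_power_iff)

locale lat =
  fixes L :: nat and P1 P2 :: pauli
  assumes L: "L \<ge> 1"
begin

abbreviation "n \<equiv> nq L"
abbreviation "S \<equiv> SX L P1 P2"
abbreviation "T \<equiv> TZ L P1 P2"
definition "Ob = (ph P1 * ph P2) \<cdot>\<^sub>m pstr n S T"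

lemma Ob_eq: "logical L P1 P2 = Ob"
  unfolding Ob_def by (rule logical_eq[OF L])

lemma Ob_carrier: "Ob \<in> carrier_mat (2^n) (2^n)"
  unfolding Ob_def by simp

lemma T_lt: "T \<subseteq> {..<n}" using TZ_lt[OF L] .

lemma stab_carrier: "stab L s \<in> carrier_mat (2^n) (2^n)"
  by (cases s) (simp_all add: stab_Plaq[OF L] stab_Vert[OF L])

lemma corr_carrier: "corr L s \<in> carrier_mat (2^n) (2^n)"
  by (cases s) (simp_all add: corr_Plaq[OF L] corr_Vert[OF L])

lemma comm_pstr: "T' \<subseteq> {..<n} \<Longrightarrow> sg S' T = sg S T' \<Longrightarrow> Ob * pstr n S' T' = pstr n S' T' * Ob"
  unfolding Ob_def by (rule comm_scaled[where N="2^n"]) (simp_all add: pstr_comm T_lt)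

lemma Ob_stab: "Ob * stab L s = stab L s * Ob"
proof (cases s)
  case (Plaq x y)
  let ?zs = "[hq L x y, hq L x (y + 1), uq L x y, uq L (x + 1) y]"
  have lt: "odds ?zs \<subseteq> {..<n}" by (rule odds_lt) (use hq_lt_nq[OF L] uq_lt[OF L] in auto)
  have "sg S (odds ?zs) = 1" unfolding sg_odds
    by (simp add: SX_hq[OF L] SX_uq[OF L])
  then show ?thesis unfolding Plaq stab_Plaq[OF L] by (intro comm_pstr[OF lt]) simp
next
  case (Vert x y)
  let ?xs = "[hq L x y, hq L (x - 1) y, uq L x y, uq L x (y - 1)]"
  have "sg (odds ?xs) T = 1" unfolding sg_comm[of _ T] sg_odds
    by (simp add: TZ_hq[OF L] TZ_uq[OF L])
  then show ?thesis unfolding Vert stab_Vert[OF L] by (intro comm_pstr) simp_all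
qed

lemma Ob_corr: "Ob * corr L s = corr L s * Ob"
proof (cases s)
  case (Plaq x y)
  have "sg (cX L x y) T = 1" unfolding cX_def
    by (simp add: sg_single TZ_hq[OF L] TZ_uq[OF L])
  then show ?thesis unfolding Plaq corr_Plaq[OF L] by (intro comm_pstr) simp_all
next
  case (Vert x y)
  have "sg S (cZ L x y) = 1" unfolding cZ_def sg_comm[of S]
    by (simp add: sg_single SX_hq[OF L] SX_uq[OF L])
  then show ?thesis unfolding Vert corr_Vert[OF L] using cZ_lt[OF L] by (intro comm_pstr) simp_all
qed

lemma stab_sq: "stab L s * stab L s = 1\<^sub>m (2^n)"
proof (cases s)
  case (Plaq x y)
  have lt: "odds [hq L x y, hq L x (y + 1), uq L x y, uq L (x + 1) y] \<subseteq> {..<n}"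
    by (rule odds_lt) (use hq_lt_nq[OF L] uq_lt[OF L] in auto)
  show ?thesis unfolding Plaq stab_Plaq[OF L] by (rule pstr_sq[OF lt]) simp
next
  case (Vert x y)
  show ?thesis unfolding Vert stab_Vert[OF L] by (rule pstr_sq) simp_all
qed

lemma corr_sq: "corr L s * corr L s = 1\<^sub>m (2^n)"
proof (cases s)
  case (Plaq x y)
  show ?thesis unfolding Plaq corr_Plaq[OF L] by (rule pstr_sq) simp_all
next
  case (Vert x y)
  show ?thesis unfolding Vert corr_Vert[OF L] by (rule pstr_sq[OF cZ_lt[OF L]]) simp
qed

lemma corr_adj: "mat_adjoint (corr L s) = corr L s"
  by (cases s) (simp_all add: corr_Plaq[OF L] corr_Vert[OF L] pstr_X pstr_Z adjoint_xop adjoint_zop)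

lemma chanT_carrier: "\<rho> \<in> carrier_mat (2^n) (2^n) \<Longrightarrow> chanT L s \<rho> \<in> carrier_mat (2^n) (2^n)"
  unfolding chanT_def projP_def projM_def
  using stab_carrier[of s] corr_carrier[of s] adjoint_dims[OF corr_carrier[of s]]
  by (simp add: sqmult[where N="2^n"] minus_carrier_mat)

lemma chanT_trace: "\<rho> \<in> carrier_mat (2^n) (2^n) \<Longrightarrow> mtrace (Ob * chanT L s \<rho>) = mtrace (Ob * \<rho>)"
  unfolding chanT_def projP_def projM_def
  by (rule chan_trace[OF Ob_carrier stab_carrier corr_carrier _ Ob_stab Ob_corr stab_sq corr_sq corr_adj])

lemma liouv_carrier: "liouv L \<rho> \<in> carrier_mat (2^n) (2^n)"
  unfolding liouv_def by simp

lemma liouv_trace: "\<rho> \<in> carrier_mat (2^n) (2^n) \<Longrightarrow> mtrace (Ob * liouv L \<rho>) = 0"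
proof -
  assume R: "\<rho> \<in> carrier_mat (2^n) (2^n)"
  have c: "chanT L s \<rho> - \<rho> \<in> carrier_mat (2^n) (2^n)" for s
    using chanT_carrier[OF R] R by (simp add: minus_carrier_mat)
  have "mtrace (Ob * liouv L \<rho>) = (\<Sum>s\<in>sites L. mtrace (Ob * (chanT L s \<rho> - \<rho>)))"
    unfolding liouv_def by (rule mtrace_sum_mat[OF Ob_carrier c])
  also have "\<dots> = 0"
    using chanT_trace[OF R] by (simp add: mtrace_minus_r[OF Ob_carrier chanT_carrier[OF R] R])
  finally show ?thesis .
qed

end


lemma mn_mult_le:
  assumes "A \<in> carrier_mat N N" "B \<in> carrier_mat N N" "mn N A \<le> a"
  shows "mn N (A * B) \<le> a * mn N B"
  using mn_mult[OF assms(1,2)] mult_right_mono[OF assms(3) mn_nonneg[of N B]] by linarith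

lemma chan_mn:
  assumes Pp: "Pp \<in> carrier_mat N N" and Pm: "Pm \<in> carrier_mat N N" and C: "C \<in> carrier_mat N N"
    and D: "D \<in> carrier_mat N N" and X: "X \<in> carrier_mat N N"
  shows "mn N (Pp * X * Pp + C * Pm * X * Pm * D - X)
     \<le> (mn N Pp * mn N Pp + mn N C * mn N Pm * mn N Pm * mn N D + 1) * mn N X"
proof -
  have c1: "Pp * X * Pp \<in> carrier_mat N N" using Pp X by (simp add: sqmult[where N=N])
  have c2: "C * Pm * X * Pm * D \<in> carrier_mat N N" using Pm C D X by (simp add: sqmult[where N=N])
  have h1: "mn N (Pp * X) \<le> mn N Pp * mn N X" by (rule mn_mult[OF Pp X])
  have h1': "mn N (Pp * X * Pp) \<le> (mn N Pp * mn N X) * mn N Pp"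
    by (rule mn_mult_le[OF _ Pp h1]) (use Pp X in \<open>simp add: sqmult[where N=N]\<close>)
  have h2: "mn N (C * Pm) \<le> mn N C * mn N Pm" by (rule mn_mult[OF C Pm])
  have h3: "mn N (C * Pm * X) \<le> (mn N C * mn N Pm) * mn N X"
    by (rule mn_mult_le[OF _ X h2]) (use C Pm in \<open>simp add: sqmult[where N=N]\<close>)
  have h4: "mn N (C * Pm * X * Pm) \<le> ((mn N C * mn N Pm) * mn N X) * mn N Pm"
    by (rule mn_mult_le[OF _ Pm h3]) (use C Pm X in \<open>simp add: sqmult[where N=N]\<close>)
  have h5: "mn N (C * Pm * X * Pm * D) \<le> (((mn N C * mn N Pm) * mn N X) * mn N Pm) * mn N D"
    by (rule mn_mult_le[OF _ D h4]) (use C Pm X in \<open>simp add: sqmult[where N=N]\<close>)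
  have "mn N (Pp * X * Pp + C * Pm * X * Pm * D - X) \<le> mn N (Pp * X * Pp + C * Pm * X * Pm * D) + mn N X"
    by (rule mn_minus) (use c1 c2 X in auto)
  also have "\<dots> \<le> mn N (Pp * X * Pp) + mn N (C * Pm * X * Pm * D) + mn N X"
    using mn_add[OF c1 c2] by linarith
  also have "\<dots> \<le> (mn N Pp * mn N Pp + mn N C * mn N Pm * mn N Pm * mn N D + 1) * mn N X"
    using h1' h5 by (simp add: algebra_simps)
  finally show ?thesis .
qed

lemma sites_finite: "finite (sites L)"
proof -
  let ?R = "{0..<int L} \<times> {0..<int L}"
  have "sites L \<subseteq> (\<lambda>(x,y). Plaq x y) ` ?R \<union> (\<lambda>(x,y). Vert x y) ` ?R"
    unfolding sites_def by force
  then show ?thesis by (rule finite_subset) auto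
qed

context lat begin

definition "Ks s = mn (2^n) (projP L s) * mn (2^n) (projP L s)
   + mn (2^n) (corr L s) * mn (2^n) (projM L s) * mn (2^n) (projM L s) * mn (2^n) (mat_adjoint (corr L s)) + 1"

lemma Ks_nonneg: "Ks s \<ge> 0"
  unfolding Ks_def using mn_nonneg by (simp add: add_nonneg_nonneg)

lemma proj_carrier: "projP L s \<in> carrier_mat (2^n) (2^n)" "projM L s \<in> carrier_mat (2^n) (2^n)"
  unfolding projP_def projM_def using stab_carrier[of s] by (auto simp: minus_carrier_mat)

lemma liouv_bound: "X \<in> carrier_mat (2^n) (2^n) \<Longrightarrow> mn (2^n) (liouv L X) \<le> (\<Sum>s\<in>sites L. Ks s) * mn (2^n) X"
proof -
  assume X: "X \<in> carrier_mat (2^n) (2^n)"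
  have "mn (2^n) (liouv L X) \<le> (\<Sum>s\<in>sites L. mn (2^n) (chanT L s X - X))"
    unfolding liouv_def by (rule mn_sum_mat[OF sites_finite])
  also have "\<dots> \<le> (\<Sum>s\<in>sites L. Ks s * mn (2^n) X)"
  proof (rule sum_mono)
    fix s
    show "mn (2^n) (chanT L s X - X) \<le> Ks s * mn (2^n) X"
      unfolding chanT_def Ks_def
      by (rule chan_mn[OF proj_carrier(1) proj_carrier(2) corr_carrier adjoint_dims[OF corr_carrier] X])
  qed
  also have "\<dots> = (\<Sum>s\<in>sites L. Ks s) * mn (2^n) X" by (simp add: sum_distrib_right)
  finally show ?thesis .
qed

lemma exp_step: "\<rho> \<in> carrier_mat (2^n) (2^n) \<Longrightarrow> mtrace (Ob * exp_liouv L t \<rho>) = mtrace (Ob * \<rho>)"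
  unfolding exp_liouv_def
  by (rule exp_trace[OF Ob_carrier _ liouv_carrier liouv_bound _ liouv_trace])
     (simp_all add: sum_nonneg Ks_nonneg)

end


lemma sum_PiE_insert:
  assumes "a \<notin> S"
  shows "(\<Sum>v\<in>PiE (insert a S) B. F v) = (\<Sum>y\<in>B a. \<Sum>g\<in>PiE S B. F (g(a := y)))"
proof -
  have "(\<Sum>(y,g)\<in>B a \<times> PiE S B. F (g(a := y))) = (\<Sum>v\<in>PiE (insert a S) B. F v)"
    using assms
    by (intro sum.reindex_bij_witness[of _ "\<lambda>g. (g a, g(a := undefined))" "\<lambda>(y,g). g(a := y)"])
       (auto simp: PiE_def extensional_def)
  then have "(\<Sum>v\<in>PiE (insert a S) B. F v) = (\<Sum>(y,g)\<in>B a \<times> PiE S B. F (g(a := y)))" ..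
  also have "\<dots> = (\<Sum>y\<in>B a. \<Sum>g\<in>PiE S B. F (g(a := y)))"
    by (subst sum.cartesian_product) simp
  finally show ?thesis .
qed

definition merge :: "'a set \<Rightarrow> ('a \<Rightarrow> 'b) \<Rightarrow> ('a \<Rightarrow> 'b) \<Rightarrow> 'a \<Rightarrow> 'b" where
  "merge X x y = (\<lambda>q. if q \<in> X then x q else y q)"

lemma sum_PiE_union:
  assumes "X \<inter> Y = {}"
  shows "(\<Sum>v\<in>PiE (X \<union> Y) B. F v) = (\<Sum>x\<in>PiE X B. \<Sum>y\<in>PiE Y B. F (merge X x y))"
proof -
  have "(\<Sum>v\<in>PiE (X \<union> Y) B. F v) = (\<Sum>(x,y)\<in>PiE X B \<times> PiE Y B. F (merge X x y))"
  proof (rule sum.reindex_bij_witness[symmetric, of _ "\<lambda>v. (restrict v X, restrict v Y)" "\<lambda>(x,y). merge X x y"])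
    fix xy assume "xy \<in> PiE X B \<times> PiE Y B"
    then obtain x y where xy: "xy = (x,y)" "x \<in> PiE X B" "y \<in> PiE Y B" by auto
    show "(\<lambda>v. (restrict v X, restrict v Y)) ((\<lambda>(x,y). merge X x y) xy) = xy"
    proof -
      have "restrict (merge X x y) X = x"
        using xy by (auto simp: merge_def restrict_def PiE_def extensional_def)
      moreover have "restrict (merge X x y) Y = y"
        by (rule ext) (use xy assms in \<open>auto simp: merge_def restrict_def PiE_def extensional_def\<close>)
      ultimately show ?thesis using xy by simp
    qed
    show "(\<lambda>(x,y). merge X x y) xy \<in> PiE (X \<union> Y) B"
      using xy by (auto simp: merge_def PiE_def extensional_def Pi_def)
  next
    fix v assume v: "v \<in> PiE (X \<union> Y) B"
    show "(\<lambda>(x,y). merge X x y) (restrict v X, restrict v Y) = v"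
      using v by (auto simp: merge_def restrict_def PiE_def extensional_def)
    show "(restrict v X, restrict v Y) \<in> PiE X B \<times> PiE Y B"
      using v by (auto simp: PiE_def Pi_def)
  qed auto
  also have "\<dots> = (\<Sum>x\<in>PiE X B. \<Sum>y\<in>PiE Y B. F (merge X x y))"
    by (subst sum.cartesian_product) simp
  finally show ?thesis .
qed

lemma KL_abstract:
  fixes H :: "nat \<Rightarrow> nat \<Rightarrow> complex" and Wf :: "(nat \<Rightarrow> nat) \<Rightarrow> complex"
  assumes ab: "a < n" "b < n" "a \<noteq> b"
    and Wc: "\<And>v w. (\<And>q. q \<in> {..<n} - {a,b} \<Longrightarrow> v q = w q) \<Longrightarrow> Wf v = Wf w"
  shows "(\<Sum>i<2^n. H (bit_of a i) (bit_of b i) * Wf (\<lambda>r. bit_of r i))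
       = (\<Sum>u\<in>B01. \<Sum>v\<in>B01. H u v) * (\<Sum>h\<in>PiE ({..<n} - {a,b}) (\<lambda>_. B01). Wf h)"
proof -
  let ?R = "{..<n} - {a,b}"
  have "(\<Sum>i<2^n. H (bit_of a i) (bit_of b i) * Wf (\<lambda>r. bit_of r i))
      = (\<Sum>v\<in>PiE {..<n} (\<lambda>_. B01). H (bit_of a (enc n v)) (bit_of b (enc n v)) * Wf (\<lambda>r. bit_of r (enc n v)))"
    by (rule sum_bits)
  also have "\<dots> = (\<Sum>v\<in>PiE {..<n} (\<lambda>_. B01). H (v a) (v b) * Wf v)"
  proof (rule sum.cong[OF refl])
    fix v assume v: "v \<in> PiE {..<n} (\<lambda>_. B01)"
    have le: "\<And>q. q < n \<Longrightarrow> v q \<le> 1" using PiE_B01_le1[OF v] by simp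
    have "Wf (\<lambda>r. bit_of r (enc n v)) = Wf v" by (rule Wc) (use bit_of_enc[OF le] in auto)
    then show "H (bit_of a (enc n v)) (bit_of b (enc n v)) * Wf (\<lambda>r. bit_of r (enc n v)) = H (v a) (v b) * Wf v"
      using bit_of_enc[OF le] ab by simp
  qed
  also have "{..<n} = insert a (insert b ?R)" using ab by auto
  also have "(\<Sum>v\<in>PiE (insert a (insert b ?R)) (\<lambda>_. B01). H (v a) (v b) * Wf v)
      = (\<Sum>y1\<in>B01. \<Sum>g\<in>PiE (insert b ?R) (\<lambda>_. B01). H y1 (g b) * Wf (g(a := y1)))"
    using ab by (subst sum_PiE_insert) auto
  also have "\<dots> = (\<Sum>y1\<in>B01. \<Sum>y2\<in>B01. \<Sum>h\<in>PiE ?R (\<lambda>_. B01). H y1 y2 * Wf (h(b := y2, a := y1)))"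
    using ab by (intro sum.cong refl, subst sum_PiE_insert) auto
  also have "\<dots> = (\<Sum>y1\<in>B01. \<Sum>y2\<in>B01. \<Sum>h\<in>PiE ?R (\<lambda>_. B01). H y1 y2 * Wf h)"
  proof (intro sum.cong refl)
    fix y1 y2 h
    have "Wf (h(b := y2, a := y1)) = Wf h" by (rule Wc) auto
    then show "H y1 y2 * Wf (h(b := y2, a := y1)) = H y1 y2 * Wf h" by simp
  qed
  also have "\<dots> = (\<Sum>u\<in>B01. \<Sum>v\<in>B01. H u v) * (\<Sum>h\<in>PiE ?R (\<lambda>_. B01). Wf h)"
    by (simp only: sum_distrib_left[symmetric] sum_distrib_right)
  finally show ?thesis .
qed


definition dI :: "nat list \<Rightarrow> (nat \<Rightarrow> nat) \<Rightarrow> nat" where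
  "dI ds h = (\<Sum>k<length ds. h (ds ! k) * 2 ^ k)"

lemma finite_B01[simp]: "finite B01" by (simp add: B01_def)

lemma card_PiE_B01: "finite X \<Longrightarrow> card (PiE X (\<lambda>_. B01)) = 2 ^ card X"
  by (simp add: card_PiE B01_def numeral_2_eq_2)

lemma sum_D:
  fixes \<rho>D :: "complex mat"
  assumes D: "finite D" and ds: "ds = sorted_list_of_set D"
  shows "(\<Sum>d\<in>PiE D (\<lambda>_. B01). \<rho>D $$ (dI ds d, dI ds d)) = (\<Sum>m<2 ^ card D. \<rho>D $$ (m, m))"
proof -
  let ?k = "card D"
  have len: "length ds = ?k" using ds D by simp
  have setds: "set ds = D" using ds D by simp
  define g where "g d = restrict (\<lambda>k. d (ds ! k)) {..<?k}" for d :: "nat \<Rightarrow> nat"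
  have inj: "inj_on g (PiE D (\<lambda>_. B01))"
  proof (rule inj_onI)
    fix d1 d2 assume d1: "d1 \<in> PiE D (\<lambda>_. B01)" and d2: "d2 \<in> PiE D (\<lambda>_. B01)" and e: "g d1 = g d2"
    show "d1 = d2"
    proof (rule ext)
      fix q show "d1 q = d2 q"
      proof (cases "q \<in> D")
        case True
        then have "q \<in> set ds" using setds by simp
        then obtain k where k: "k < length ds" "ds ! k = q" by (auto simp: in_set_conv_nth)
        have "g d1 k = g d2 k" using e by simp
        then show ?thesis using k len unfolding g_def by simp
      next
        case False then show ?thesis using PiE_arb[OF d1 False] PiE_arb[OF d2 False] by simp
      qed
    qed
  qed
  have sub: "g ` PiE D (\<lambda>_. B01) \<subseteq> PiE {..<?k} (\<lambda>_. B01)"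
  proof
    fix w assume "w \<in> g ` PiE D (\<lambda>_. B01)"
    then obtain d where d: "d \<in> PiE D (\<lambda>_. B01)" "w = g d" by auto
    have "ds ! k \<in> D" if "k < ?k" for k using that len setds nth_mem[of k ds] by simp
    then show "w \<in> PiE {..<?k} (\<lambda>_. B01)" using d unfolding g_def by (auto simp: PiE_mem)
  qed
  have img: "g ` PiE D (\<lambda>_. B01) = PiE {..<?k} (\<lambda>_. B01)"
    by (rule card_subset_eq[OF _ sub]) (simp_all add: card_image[OF inj] card_PiE_B01 D finite_PiE)
  have dIg: "dI ds d = enc ?k (g d)" for d
    unfolding dI_def enc_def g_def len by simp
  have "(\<Sum>d\<in>PiE D (\<lambda>_. B01). \<rho>D $$ (dI ds d, dI ds d)) = (\<Sum>d\<in>PiE D (\<lambda>_. B01). \<rho>D $$ (enc ?k (g d), enc ?k (g d)))"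
    by (simp add: dIg)
  also have "\<dots> = (\<Sum>w\<in>g ` PiE D (\<lambda>_. B01). \<rho>D $$ (enc ?k w, enc ?k w))"
    by (rule sum.reindex[OF inj, symmetric, unfolded comp_def])
  also have "\<dots> = (\<Sum>m<2 ^ ?k. \<rho>D $$ (m, m))"
    unfolding img by (rule sum_bits[symmetric])
  finally show ?thesis .
qed

lemma sum_C: "finite CC \<Longrightarrow> (\<Sum>c\<in>PiE CC (\<lambda>_. B01). \<Prod>q\<in>CC. if c q = 0 then 1 else (0::complex)) = 1"
proof -
  assume f: "finite CC"
  have "(\<Prod>q\<in>CC. \<Sum>y\<in>B01. if y = 0 then 1 else (0::complex)) = (\<Sum>c\<in>PiE CC (\<lambda>_. B01). \<Prod>q\<in>CC. if c q = 0 then 1 else (0::complex))"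
    by (rule prod_sum_PiE) (use f in \<open>auto simp: B01_def\<close>)
  moreover have "(\<Prod>q\<in>CC. \<Sum>y\<in>B01. if y = 0 then 1 else (0::complex)) = 1"
    by (simp add: B01_def)
  ultimately show ?thesis by simp
qed

lemma Wsum:
  fixes \<rho>D :: "complex mat"
  assumes fin: "finite BB" "finite CC" "finite D"
    and disj: "BB \<inter> (CC \<union> D) = {}" "CC \<inter> D = {}"
    and ds: "ds = sorted_list_of_set D"
    and tr: "dim_row \<rho>D = 2 ^ card D" "mtrace \<rho>D = 1"
  shows "(\<Sum>h\<in>PiE (BB \<union> (CC \<union> D)) (\<lambda>_. B01).
      (\<Prod>q\<in>BB. (1/2::complex)) * (\<Prod>q\<in>CC. if h q = 0 then 1 else 0) * \<rho>D $$ (dI ds h, dI ds h)) = 1"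
proof -
  have dsD: "set ds = D" using ds fin by simp
  define Wy where "Wy h = (\<Prod>q\<in>CC. if h q = 0 then 1 else (0::complex)) * \<rho>D $$ (dI ds h, dI ds h)" for h
  have dImerge: "dI ds (merge X x y) = dI ds y" if "X \<inter> D = {}" for X x y
  proof -
    have "ds ! k \<notin> X" if "k < length ds" for k using that dsD \<open>X \<inter> D = {}\<close> nth_mem by blast
    then show ?thesis unfolding dI_def merge_def by simp
  qed
  have step1: "(\<Sum>h\<in>PiE (BB \<union> (CC \<union> D)) (\<lambda>_. B01). (\<Prod>q\<in>BB. (1/2::complex)) * (\<Prod>q\<in>CC. if h q = 0 then 1 else 0) * \<rho>D $$ (dI ds h, dI ds h))
      = (\<Sum>x\<in>PiE BB (\<lambda>_. B01). \<Sum>y\<in>PiE (CC \<union> D) (\<lambda>_. B01). (1/2) ^ card BB * Wy y)"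
    unfolding sum_PiE_union[OF disj(1)]
  proof (intro sum.cong refl)
    fix x y :: "nat \<Rightarrow> nat"
    have "(\<Prod>q\<in>CC. if merge BB x y q = 0 then 1 else (0::complex)) = (\<Prod>q\<in>CC. if y q = 0 then 1 else 0)"
      using disj(1) by (intro prod.cong refl) (auto simp: merge_def)
    moreover have "dI ds (merge BB x y) = dI ds y" using disj(1) by (intro dImerge) auto
    ultimately show "(\<Prod>q\<in>BB. (1/2::complex)) * (\<Prod>q\<in>CC. if merge BB x y q = 0 then 1 else 0) * \<rho>D $$ (dI ds (merge BB x y), dI ds (merge BB x y))
        = (1/2) ^ card BB * Wy y"
      unfolding Wy_def by (simp add: mult.assoc)
  qed
  have step2: "(\<Sum>x\<in>PiE BB (\<lambda>_. B01). \<Sum>y\<in>PiE (CC \<union> D) (\<lambda>_. B01). (1/2) ^ card BB * Wy y)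
      = of_nat (2 ^ card BB) * ((1/2) ^ card BB * (\<Sum>y\<in>PiE (CC \<union> D) (\<lambda>_. B01). Wy y))"
    unfolding sum_constant card_PiE_B01[OF fin(1)] sum_distrib_left by simp
  have step3: "(\<Sum>y\<in>PiE (CC \<union> D) (\<lambda>_. B01). Wy y)
      = (\<Sum>c\<in>PiE CC (\<lambda>_. B01). \<Sum>d\<in>PiE D (\<lambda>_. B01). (\<Prod>q\<in>CC. if c q = 0 then 1 else (0::complex)) * \<rho>D $$ (dI ds d, dI ds d))"
    unfolding sum_PiE_union[OF disj(2)]
  proof (intro sum.cong refl)
    fix x y :: "nat \<Rightarrow> nat"
    have "(\<Prod>q\<in>CC. if merge CC x y q = 0 then 1 else (0::complex)) = (\<Prod>q\<in>CC. if x q = 0 then 1 else 0)"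
      by (intro prod.cong refl) (auto simp: merge_def)
    moreover have "dI ds (merge CC x y) = dI ds y" using disj(2) by (intro dImerge)
    ultimately show "Wy (merge CC x y) = (\<Prod>q\<in>CC. if x q = 0 then 1 else (0::complex)) * \<rho>D $$ (dI ds y, dI ds y)"
      unfolding Wy_def by simp
  qed
  have step4: "(\<Sum>c\<in>PiE CC (\<lambda>_. B01). \<Sum>d\<in>PiE D (\<lambda>_. B01). (\<Prod>q\<in>CC. if c q = 0 then 1 else (0::complex)) * \<rho>D $$ (dI ds d, dI ds d))
     = (\<Sum>c\<in>PiE CC (\<lambda>_. B01). \<Prod>q\<in>CC. if c q = 0 then 1 else (0::complex)) * (\<Sum>d\<in>PiE D (\<lambda>_. B01). \<rho>D $$ (dI ds d, dI ds d))"
    by (rule sum_product[symmetric])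
  have "(\<Sum>d\<in>PiE D (\<lambda>_. B01). \<rho>D $$ (dI ds d, dI ds d)) = (\<Sum>m<2 ^ card D. \<rho>D $$ (m, m))"
    by (rule sum_D[OF fin(3) ds])
  also have "\<dots> = mtrace \<rho>D" unfolding mtrace_def tr(1) ..
  finally have step5: "(\<Sum>d\<in>PiE D (\<lambda>_. B01). \<rho>D $$ (dI ds d, dI ds d)) = 1" using tr(2) by simp
  have pw: "of_nat (2 ^ card BB) * ((1/2) ^ card BB) = (1::complex)"
    by (simp add: power_mult_distrib[symmetric])
  show ?thesis
    unfolding step1 step2 step3 step4 step5 sum_C[OF fin(2)] using pw by simp
qed


context lat begin

abbreviation "a \<equiv> qA1 L"
abbreviation "b \<equiv> qA2 L"
abbreviation "BB \<equiv> qB L \<union> qB' L"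
abbreviation "CC \<equiv> qC L \<union> qC' L"
abbreviation "D \<equiv> qD L"

lemma ab_lt: "a < n" "b < n"
  unfolding qA1_def qA2_def using hq_lt_nq[OF L] uq_lt[OF L] by auto

lemma a_ne_b: "a \<noteq> b"
  unfolding qA1_def qA2_def using hq_ne_uq[OF L] by auto

lemma a_S: "a \<in> S \<longleftrightarrow> hasX P1" unfolding qA1_def using SX_hq[OF L] by simp
lemma b_S: "b \<in> S \<longleftrightarrow> hasX P2" unfolding qA2_def using SX_uq[OF L] by simp
lemma a_T: "a \<in> T \<longleftrightarrow> hasZ P1" unfolding qA1_def using TZ_hq[OF L] by simp
lemma b_T: "b \<in> T \<longleftrightarrow> hasZ P2" unfolding qA2_def using TZ_uq[OF L] by simp

lemma BB_sub: "BB \<subseteq> {..<n}"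
  using sets_lt[OF L] unfolding X1s_def X2s_def by auto
lemma CC_sub: "CC \<subseteq> {..<n}"
  using sets_lt[OF L] unfolding Z1s_def Z2s_def by auto
lemma D_sub: "D \<subseteq> {..<n}"
  unfolding qD_def by auto

lemma fins: "finite BB" "finite CC" "finite D"
  using BB_sub CC_sub D_sub finite_subset by blast+

lemma S_sub: "S \<subseteq> insert a (insert b BB)"
  unfolding SX_def X1s_def X2s_def by auto

lemma T_sub: "T \<subseteq> insert a (insert b CC)"
  unfolding TZ_def Z1s_def Z2s_def by auto

lemma S_CC: "q \<in> CC \<Longrightarrow> q \<notin> S"
proof -
  assume "q \<in> CC"
  then show "q \<notin> S"
  proof
    assume "q \<in> qC L"
    then obtain x where "q = hq L x 1" "cmod L x \<noteq> 0" unfolding qC_def by auto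
    then show ?thesis using SX_hq[OF L] cmod_zero[OF L] by auto
  next
    assume "q \<in> qC' L"
    then obtain y where "q = uq L 1 y" "cmod L y \<noteq> 0" unfolding qC'_def by auto
    then show ?thesis using SX_uq[OF L] cmod_zero[OF L] by auto
  qed
qed

lemma S_D: "q \<in> D \<Longrightarrow> q \<notin> S"
  using S_sub unfolding qD_def by auto

lemma a_notin: "a \<notin> BB" "a \<notin> CC"
  using qA1_notin_qB[OF L] qA1_notin_qC[OF L] hq_ne_uq[OF L]
  unfolding qA1_def qB'_def qC'_def by auto

lemma b_notin: "b \<notin> BB" "b \<notin> CC"
  using qA2_notin_qB'[OF L] qA2_notin_qC'[OF L] hq_ne_uq[OF L]
  unfolding qA2_def qB_def qC_def by (auto simp: eq_commute[of "uq L _ _"])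

lemma BB_CC: "BB \<inter> CC = {}"
proof -
  have "qB L \<inter> qC L = {}"
    unfolding qB_def qC_def using hq_eq[OF L] by (auto simp: cmod_def)
  moreover have "qB' L \<inter> qC' L = {}"
    unfolding qB'_def qC'_def using uq_eq[OF L] by (auto simp: cmod_def)
  moreover have "qB L \<inter> qC' L = {}" "qB' L \<inter> qC L = {}"
    unfolding qB_def qC'_def qB'_def qC_def using hq_ne_uq[OF L] by (auto simp: eq_commute[of "uq L _ _"])
  ultimately show ?thesis by blast
qed

lemma R_eq: "{..<n} - {a, b} = BB \<union> (CC \<union> D)"
  using BB_sub CC_sub a_notin b_notin unfolding qD_def by auto

lemma disjR: "BB \<inter> (CC \<union> D) = {}" "CC \<inter> D = {}"
  using BB_CC unfolding qD_def by auto

end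


lemma pstr_index:
  assumes "i < 2^n" "k < 2^n"
  shows "pstr n S T $$ (i,k) = (if sim n S i k then zsgn T k else 0)"
proof -
  have "pstr n S T $$ (i,k) = (\<Sum>l<2^n. xop n S $$ (i,l) * zop n T $$ (l,k))"
    unfolding pstr_def by (rule mult_entry) (use assms in auto)
  also have "\<dots> = xop n S $$ (i, k) * zop n T $$ (k, k)"
    by (rule sum_single[OF assms(2)]) (auto simp: zop_index assms)
  also have "\<dots> = (if sim n S i k then zsgn T k else 0)" by (simp add: zop_index xop_index assms)
  finally show ?thesis .
qed

lemma trace_pstr:
  assumes M: "M \<in> carrier_mat (2^n) (2^n)"
  shows "mtrace (pstr n S T * M) = (\<Sum>i<2^n. zsgn T (flip n S i) * M $$ (flip n S i, i))"
proof -
  have "mtrace (pstr n S T * M) = (\<Sum>i<2^n. \<Sum>k<2^n. pstr n S T $$ (i,k) * M $$ (k,i))"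
    by (rule mtrace_prod[OF pstr_carrier M])
  also have "\<dots> = (\<Sum>i<2^n. zsgn T (flip n S i) * M $$ (flip n S i, i))"
  proof (rule sum.cong[OF refl])
    fix i assume i: "i \<in> {..<(2::nat)^n}"
    show "(\<Sum>k<2^n. pstr n S T $$ (i,k) * M $$ (k,i)) = zsgn T (flip n S i) * M $$ (flip n S i, i)"
      by (subst sum_single[OF flip_less[of n S i]]) (use i in \<open>auto simp: pstr_index sim_iff flip_less sim_flip\<close>)
  qed
  finally show ?thesis .
qed

lemma mtrace_smult: "A \<in> carrier_mat N N \<Longrightarrow> mtrace (c \<cdot>\<^sub>m A) = c * mtrace (A :: complex mat)"
  unfolding mtrace_def by (auto simp: sum_distrib_left intro!: sum.cong)

lemma prod_pair:
  assumes "a \<noteq> b" "finite T"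
  shows "prod f T = (if a \<in> T then f a else 1) * (if b \<in> T then f b else 1) * prod f (T - {a,b})"
proof -
  have "prod f T = prod f (T \<inter> {a,b}) * prod f (T - {a,b})"
    by (rule prod.Int_Diff[OF assms(2)])
  moreover have "prod f (T \<inter> {a,b}) = (if a \<in> T then f a else 1) * (if b \<in> T then f b else 1)"
  proof (cases "a \<in> T"; cases "b \<in> T")
    assume "a \<in> T" "b \<in> T" then have "T \<inter> {a,b} = {a,b}" by auto
    then show ?thesis using assms \<open>a \<in> T\<close> \<open>b \<in> T\<close> by simp
  next
    assume "a \<in> T" "b \<notin> T" then have "T \<inter> {a,b} = {a}" by auto
    then show ?thesis using \<open>a \<in> T\<close> \<open>b \<notin> T\<close> by simp
  next
    assume "a \<notin> T" "b \<in> T" then have "T \<inter> {a,b} = {b}" by auto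
    then show ?thesis using \<open>a \<notin> T\<close> \<open>b \<in> T\<close> by simp
  next
    assume "a \<notin> T" "b \<notin> T" then have "T \<inter> {a,b} = {}" by auto
    then show ?thesis using \<open>a \<notin> T\<close> \<open>b \<notin> T\<close> by simp
  qed
  ultimately show ?thesis by simp
qed

context lat begin

definition "fx1 u = (if hasX P1 then 1 - u else (u::nat))"
definition "fx2 v = (if hasX P2 then 1 - v else (v::nat))"
definition "sA u v = (if hasZ P1 \<and> u = (1::nat) then -1 else (1::complex)) * (if hasZ P2 \<and> v = (1::nat) then -1 else 1)"
definition "Hf \<Psi> u v = sA (fx1 u) (fx2 v) * (\<Psi> $ (2 * fx1 u + fx2 v) * cnj (\<Psi> $ (2 * u + v)))"
definition "Wf \<rho>D h = (\<Prod>q\<in>BB. (1/2::complex)) * (\<Prod>q\<in>CC. if h q = 0 then 1 else 0)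
    * \<rho>D $$ (dI (sorted_list_of_set D) h, dI (sorted_list_of_set D) h)"

lemma T_fin: "finite T" using T_lt finite_subset by blast

lemma dIndex_eq: "dIndex L i = dI (sorted_list_of_set D) (\<lambda>r. bit_of r i)"
  unfolding dIndex_def dI_def Let_def ..

lemma summand:
  assumes i: "i < 2^n"
  shows "zsgn T (flip n S i) * rho0 L \<Psi> \<rho>D $$ (flip n S i, i) = Hf \<Psi> (bit_of a i) (bit_of b i) * Wf \<rho>D (\<lambda>r. bit_of r i)"
proof -
  define j where "j = flip n S i"
  define ds where "ds = sorted_list_of_set D"
  have j: "j < 2^n" unfolding j_def by (rule flip_less)
  have bj: "bit_of r j = (if r \<in> S then 1 - bit_of r i else bit_of r i)" if "r < n" for r
    unfolding j_def using that by (rule bit_of_flip)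
  have ja: "bit_of a j = fx1 (bit_of a i)" using bj[OF ab_lt(1)] a_S unfolding fx1_def by simp
  have jb: "bit_of b j = fx2 (bit_of b i)" using bj[OF ab_lt(2)] b_S unfolding fx2_def by simp
  have jC: "bit_of q j = bit_of q i" if "q \<in> CC" for q using bj[of q] CC_sub S_CC[OF that] that by auto
  have jD: "bit_of q j = bit_of q i" if "q \<in> D" for q using bj[of q] D_sub S_D[OF that] that by auto
  have dsD: "set ds = D" unfolding ds_def using fins(3) by simp
  have dj: "dIndex L j = dIndex L i"
    unfolding dIndex_eq dI_def
  proof (intro sum.cong refl)
    fix k assume "k \<in> {..<length (sorted_list_of_set D)}"
    then have "sorted_list_of_set D ! k \<in> D" using nth_mem dsD unfolding ds_def by auto
    then show "bit_of (sorted_list_of_set D ! k) j * 2 ^ k = bit_of (sorted_list_of_set D ! k) i * 2 ^ k"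
      using jD by simp
  qed
  define PC where "PC = (\<Prod>q\<in>CC. if bit_of q i = 0 then 1 else (0::complex))"
  have rho: "rho0 L \<Psi> \<rho>D $$ (j, i) = \<Psi> $ (2 * bit_of a j + bit_of b j) * cnj (\<Psi> $ (2 * bit_of a i + bit_of b i))
      * (\<Prod>q\<in>BB. (1/2::complex)) * PC * \<rho>D $$ (dIndex L i, dIndex L i)"
  proof -
    have "(\<Prod>q\<in>CC. if bit_of q j = 0 \<and> bit_of q i = 0 then 1 else (0::complex)) = PC"
      unfolding PC_def by (intro prod.cong refl) (simp add: jC)
    then show ?thesis unfolding rho0_def using i j dj by simp
  qed
  have sgn: "zsgn T j * PC = sA (bit_of a j) (bit_of b j) * PC"
  proof (cases "\<forall>q\<in>CC. bit_of q i = 0")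
    case True
    let ?f = "\<lambda>r. if bit_of r j = 1 then -1 else (1::complex)"
    have "prod ?f (T - {a,b}) = 1"
    proof (rule prod.neutral, rule ballI)
      fix r assume "r \<in> T - {a,b}"
      then have "r \<in> CC" using T_sub by auto
      then show "?f r = 1" using True jC by auto
    qed
    then have "zsgn T j = (if a \<in> T then ?f a else 1) * (if b \<in> T then ?f b else 1)"
      unfolding zsgn_def using prod_pair[OF a_ne_b T_fin, of ?f] by simp
    then show ?thesis unfolding sA_def using a_T b_T by simp
  next
    case False
    then have "PC = 0" unfolding PC_def using fins(2) by (auto simp: prod_zero_iff)
    then show ?thesis by simp
  qed
  have "zsgn T j * rho0 L \<Psi> \<rho>D $$ (j, i) = (zsgn T j * PC) * (\<Psi> $ (2 * bit_of a j + bit_of b j)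
      * cnj (\<Psi> $ (2 * bit_of a i + bit_of b i)) * (\<Prod>q\<in>BB. (1/2::complex)) * \<rho>D $$ (dIndex L i, dIndex L i))"
    unfolding rho by (simp add: ac_simps)
  also have "\<dots> = Hf \<Psi> (bit_of a i) (bit_of b i) * Wf \<rho>D (\<lambda>r. bit_of r i)"
    unfolding sgn unfolding Hf_def Wf_def ja jb PC_def dIndex_eq by (simp add: ac_simps)
  finally show ?thesis unfolding j_def .
qed

lemma tr_step1:
  assumes R: "rho0 L \<Psi> \<rho>D \<in> carrier_mat (2^n) (2^n)"
  shows "mtrace (Ob * rho0 L \<Psi> \<rho>D) = (ph P1 * ph P2) * mtrace (pstr n S T * rho0 L \<Psi> \<rho>D)"
proof -
  have "Ob * rho0 L \<Psi> \<rho>D = (ph P1 * ph P2) \<cdot>\<^sub>m (pstr n S T * rho0 L \<Psi> \<rho>D)"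
    unfolding Ob_def by (rule smult_l[OF pstr_carrier R])
  then show ?thesis using mtrace_smult[OF sqmult[OF pstr_carrier R]] by simp
qed

lemma tr_step2:
  assumes R: "rho0 L \<Psi> \<rho>D \<in> carrier_mat (2^n) (2^n)"
  shows "mtrace (pstr n S T * rho0 L \<Psi> \<rho>D) = (\<Sum>i<2^n. Hf \<Psi> (bit_of a i) (bit_of b i) * Wf \<rho>D (\<lambda>r. bit_of r i))"
  unfolding trace_pstr[OF R]
proof (rule sum.cong[OF refl])
  fix i assume "i \<in> {..<(2::nat)^n}"
  then show "zsgn T (flip n S i) * rho0 L \<Psi> \<rho>D $$ (flip n S i, i) = Hf \<Psi> (bit_of a i) (bit_of b i) * Wf \<rho>D (\<lambda>r. bit_of r i)"
    by (intro summand) simp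
qed

lemma tr_step3:
  "(\<Sum>i<2^n. Hf \<Psi> (bit_of a i) (bit_of b i) * Wf \<rho>D (\<lambda>r. bit_of r i))
   = (\<Sum>u\<in>B01. \<Sum>v\<in>B01. Hf \<Psi> u v) * (\<Sum>h\<in>PiE ({..<n} - {a,b}) (\<lambda>_. B01). Wf \<rho>D h)"
proof (rule KL_abstract[OF ab_lt a_ne_b])
  define ds where "ds = sorted_list_of_set D"
  fix v w :: "nat \<Rightarrow> nat" assume agree: "\<And>q. q \<in> {..<n} - {a,b} \<Longrightarrow> v q = w q"
  have agree': "\<And>q. q \<in> BB \<union> (CC \<union> D) \<Longrightarrow> v q = w q" using agree unfolding R_eq .
  have "(\<Prod>q\<in>CC. if v q = 0 then 1 else (0::complex)) = (\<Prod>q\<in>CC. if w q = 0 then 1 else 0)"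
  proof (rule prod.cong[OF refl])
    fix q assume "q \<in> CC" then show "(if v q = 0 then 1 else (0::complex)) = (if w q = 0 then 1 else 0)"
      using agree'[of q] by simp
  qed
  moreover have "dI ds v = dI ds w"
    unfolding dI_def
  proof (rule sum.cong[OF refl])
    fix k assume "k \<in> {..<length ds}"
    then have "ds ! k \<in> D" using nth_mem[of k ds] fins(3) unfolding ds_def by simp
    then show "v (ds ! k) * 2 ^ k = w (ds ! k) * 2 ^ k" using agree'[of "ds ! k"] by simp
  qed
  ultimately show "Wf \<rho>D v = Wf \<rho>D w" unfolding Wf_def ds_def by simp
qed

lemma tr_step4:
  assumes dens: "is_density (2 ^ card D) \<rho>D"
  shows "(\<Sum>h\<in>PiE ({..<n} - {a,b}) (\<lambda>_. B01). Wf \<rho>D h) = 1"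
proof -
  have dr: "dim_row \<rho>D = 2 ^ card D" and tr: "mtrace \<rho>D = 1" using dens unfolding is_density_def by auto
  show ?thesis unfolding R_eq Wf_def by (rule Wsum[OF fins disjR refl dr tr])
qed

lemma trace_rho0:
  assumes dens: "is_density (2 ^ card D) \<rho>D"
  shows "mtrace (Ob * rho0 L \<Psi> \<rho>D) = (ph P1 * ph P2) * (\<Sum>u\<in>B01. \<Sum>v\<in>B01. Hf \<Psi> u v)"
proof -
  have R: "rho0 L \<Psi> \<rho>D \<in> carrier_mat (2^n) (2^n)" unfolding rho0_def by simp
  show ?thesis unfolding tr_step1[OF R] tr_step2[OF R] tr_step3 tr_step4[OF dens] by simp
qed

end


lemma sum4: "(\<Sum>i<(4::nat). f i) = f 0 + f 1 + f 2 + (f 3 :: complex)"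
proof -
  have e: "{..<4::nat} = {0,1,2,3}" by auto
  show ?thesis unfolding e by (simp add: algebra_simps)
qed

lemma qform:
  fixes \<Psi> :: "complex vec"
  assumes "\<Psi> \<in> carrier_vec 4" "K \<in> carrier_mat 4 4"
  shows "conjugate \<Psi> \<bullet> (K *\<^sub>v \<Psi>) = (\<Sum>i<4. cnj (\<Psi> $ i) * (\<Sum>l<4. K $$ (i,l) * \<Psi> $ l))"
  using assms by (simp add: scalar_prod_def lessThan_atLeast0)

lemma kron2_index: "i < 4 \<Longrightarrow> l < 4 \<Longrightarrow> kron2 A B $$ (i,l) = A $$ (i div 2, l div 2) * B $$ (i mod 2, l mod 2)"
  unfolding kron2_def by simp

lemma kron2_carrier: "kron2 A B \<in> carrier_mat 4 4"
  unfolding kron2_def by simp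

lemma pmat_entries:
  "pmat PI $$ (0,0) = 1" "pmat PI $$ (0,1) = 0" "pmat PI $$ (1,0) = 0" "pmat PI $$ (1,1) = 1"
  "pmat PX $$ (0,0) = 0" "pmat PX $$ (0,1) = 1" "pmat PX $$ (1,0) = 1" "pmat PX $$ (1,1) = 0"
  "pmat PY $$ (0,0) = 0" "pmat PY $$ (0,1) = -\<i>" "pmat PY $$ (1,0) = \<i>" "pmat PY $$ (1,1) = 0"
  "pmat PZ $$ (0,0) = 1" "pmat PZ $$ (0,1) = 0" "pmat PZ $$ (1,0) = 0" "pmat PZ $$ (1,1) = -1"
  unfolding pmat_def sigX_def sigY_def sigZ_def by simp_all

context lat begin

lemma pauli_calc:
  fixes \<Psi> :: "complex vec"
  assumes Psi: "\<Psi> \<in> carrier_vec 4"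
  shows "(ph P1 * ph P2) * (\<Sum>u\<in>B01. \<Sum>v\<in>B01. Hf \<Psi> u v) = conjugate \<Psi> \<bullet> (kron2 (pmat P1) (pmat P2) *\<^sub>v \<Psi>)"
  unfolding qform[OF Psi kron2_carrier] sum4 Hf_def sA_def fx1_def fx2_def
  apply (cases P1; cases P2)
  apply (simp_all add: kron2_index pmat_def sigX_def sigY_def sigZ_def hasX_def hasZ_def ph_def B01_def algebra_simps)
  apply (simp_all add: numeral_2_eq_2 numeral_3_eq_3 algebra_simps)
  done

end


theorem lemma1:
  fixes L :: nat and \<Psi> :: "complex vec" and \<rho>D :: "complex mat"
    and P1 P2 :: pauli and t :: real
  assumes "L \<ge> 1"
    and "\<Psi> \<in> carrier_vec 4"
    and "is_density (2 ^ card (qD L)) \<rho>D"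
    and "t \<ge> 0"
  shows "mtrace (logical L P1 P2 * exp_liouv L t (rho0 L \<Psi> \<rho>D))
           = conjugate \<Psi> \<bullet> (kron2 (pmat P1) (pmat P2) *\<^sub>v \<Psi>)"
proof -
  interpret lat L P1 P2 by unfold_locales (rule assms(1))
  have R: "rho0 L \<Psi> \<rho>D \<in> carrier_mat (2^nq L) (2^nq L)" unfolding rho0_def by simp
  have "mtrace (logical L P1 P2 * exp_liouv L t (rho0 L \<Psi> \<rho>D)) = mtrace (Ob * rho0 L \<Psi> \<rho>D)"
    unfolding Ob_eq by (rule exp_step[OF R])
  also have "\<dots> = (ph P1 * ph P2) * (\<Sum>u\<in>B01. \<Sum>v\<in>B01. Hf \<Psi> u v)"
    by (rule trace_rho0[OF assms(3)])
  also have "\<dots> = conjugate \<Psi> \<bullet> (kron2 (pmat P1) (pmat P2) *\<^sub>v \<Psi>)"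
    by (rule pauli_calc[OF assms(2)])
  finally show ?thesis .
qed


end
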